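(* Let $W\in C^{1}(\mathbb{R})$ satisfy (W-i) there is $\eta>0$ with $W(s)\geq\eta s^2$ for $|s|\leq1$ and $W(s)\geq\eta$ for $|s|\geq1$; (W-ii) $W''(0)=1$; (W-iii) there are $M>0$, $\alpha\in[0,2)$ with $W(s)\leq M|s|^\alpha$ for all $s\geq0$. Let $\delta>0$ and let $\mathbf{u}_\delta=(u_\delta,v_\delta)\in X=H^2(\mathbb{R})\times L^2(\mathbb{R})$ be a minimizer (over $\{\mathbf{u}\in X: C(\mathbf{u})\neq0\}$) of $J_\delta(\mathbf{u})=\frac{E(\mathbf{u})}{|C(\mathbf{u})|}+\delta E(\mathbf{u})$, i.e. a hylomorphic soliton as produced for the nonlinear beam equation in the paper's existence theorem. Then the solution of $\partial_t^2u+\partial_x^4u+W'(u)=0$ with initial data $(u_\delta,v_\delta)$ has the form $u(t,x)=u_\delta(x-ct)$, where $u_\delta$ solves $$\frac{d^4u_\delta}{dx^4}+c^2\frac{d^2u_\delta}{dx^2}+W'(u_\delta)=0$$ and $c$ is a constant depending on $\mathbf{u}_\delta$.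
   Context: Here $E(\mathbf{u})=\frac12\int(v^2+u_{xx}^2)\,dx+\int W(u)\,dx$ and $C(\mathbf{u})=-\int v\,u_x\,dx$ for $\mathbf{u}=(u,v)\in X$; the first component of the phase-space point is the displacement $u$ and the second is $v=\partial_t u$. *)

theory Defs
  imports "HOL-Analysis.Analysis"
begin

definition L2fun :: "(real \<Rightarrow> real) \<Rightarrow> bool" where
  "L2fun f \<longleftrightarrow> f \<in> borel_measurable lborel \<and> integrable lborel (\<lambda>x. (f x)\<^sup>2)"

text \<open>w is a second (weak) derivative of u: u is differentiable everywhere with an L^2
  derivative u1, and u1 is absolutely continuous with a.e. derivative w.\<close>
definition is_d2 :: "(real \<Rightarrow> real) \<Rightarrow> (real \<Rightarrow> real) \<Rightarrow> bool" where
  "is_d2 u w \<longleftrightarrow> (\<exists>u1. (\<forall>x. (u has_real_derivative u1 x) (at x)) \<and> L2fun u1 \<and>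
       (\<forall>x. u1 x = u1 0 + (LBINT t=0..x. w t)))"

text \<open>H^2(R), identifying each class with its C^1 representative.\<close>
definition H2 :: "(real \<Rightarrow> real) set" where
  "H2 = {u. L2fun u \<and> (\<exists>w. L2fun w \<and> is_d2 u w)}"

definition uxx :: "(real \<Rightarrow> real) \<Rightarrow> real \<Rightarrow> real" where
  "uxx u = (SOME w. L2fun w \<and> is_d2 u w)"

definition energy :: "(real \<Rightarrow> real) \<Rightarrow> (real \<Rightarrow> real) \<Rightarrow> (real \<Rightarrow> real) \<Rightarrow> real" where
  "energy W u v = (1/2) * (LINT x|lborel. (v x)\<^sup>2 + (uxx u x)\<^sup>2) + (LINT x|lborel. W (u x))"

definition momentum :: "(real \<Rightarrow> real) \<Rightarrow> (real \<Rightarrow> real) \<Rightarrow> real" where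
  "momentum u v = - (LINT x|lborel. v x * deriv u x)"

definition Jdelta :: "real \<Rightarrow> (real \<Rightarrow> real) \<Rightarrow> (real \<Rightarrow> real) \<Rightarrow> (real \<Rightarrow> real) \<Rightarrow> real" where
  "Jdelta \<delta> W u v = energy W u v / \<bar>momentum u v\<bar> + \<delta> * energy W u v"

definition diff_upto :: "nat \<Rightarrow> (real \<Rightarrow> real) \<Rightarrow> bool" where
  "diff_upto k f \<longleftrightarrow> (\<forall>j<k. \<forall>x. ((deriv ^^ j) f has_real_derivative (deriv ^^ Suc j) f x) (at x))"

definition beam_solution :: "(real \<Rightarrow> real) \<Rightarrow> (real \<Rightarrow> real \<Rightarrow> real) \<Rightarrow> bool" where
  "beam_solution W U \<longleftrightarrow> (\<forall>x. diff_upto 2 (\<lambda>t. U t x)) \<and> (\<forall>t. diff_upto 4 (\<lambda>x. U t x)) \<and>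
     (\<forall>t x. (deriv ^^ 2) (\<lambda>s. U s x) t + (deriv ^^ 4) (\<lambda>y. U t y) x + deriv W (U t x) = 0)"

end

theory Submission
  imports Defs
begin

lemma antideriv:
  fixes f :: "real \<Rightarrow> real"
  assumes "continuous_on UNIV f"
  shows "\<exists>F. \<forall>x. (F has_real_derivative f x) (at x)"
proof -
  have "\<exists>F. \<forall>x :: real. -\<infinity> < x \<longrightarrow> x < \<infinity> \<longrightarrow> (F has_vector_derivative f x) (at x)"
    by (rule einterval_antiderivative) (use assms in \<open>auto simp: continuous_on_eq_continuous_at\<close>)
  then show ?thesis by (auto simp: has_real_derivative_iff_has_vector_derivative)
qed

lemma L2_mult:
  assumes "L2fun f" "L2fun g"
  shows "integrable lborel (\<lambda>x. f x * g x)"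
proof (rule Bochner_Integration.integrable_bound[of _ "\<lambda>x. (f x)\<^sup>2 + (g x)\<^sup>2"])
  show "integrable lborel (\<lambda>x. (f x)\<^sup>2 + (g x)\<^sup>2)" using assms unfolding L2fun_def by auto
  show "(\<lambda>x. f x * g x) \<in> borel_measurable lborel" using assms unfolding L2fun_def by auto
  show "AE x in lborel. norm (f x * g x) \<le> norm ((f x)\<^sup>2 + (g x)\<^sup>2)"
  proof (rule AE_I2)
    fix x
    have "0 \<le> (\<bar>f x\<bar> - \<bar>g x\<bar>)\<^sup>2" by simp
    then have h1: "2*(\<bar>f x\<bar>*\<bar>g x\<bar>) \<le> (f x)\<^sup>2 + (g x)\<^sup>2"
      by (simp add: power2_eq_square algebra_simps)
    have h2: "0 \<le> \<bar>f x\<bar>*\<bar>g x\<bar>" by simp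
    have h3: "norm (f x * g x) = \<bar>f x\<bar>*\<bar>g x\<bar>" by (simp add: abs_mult)
    have h4: "norm ((f x)\<^sup>2 + (g x)\<^sup>2) = (f x)\<^sup>2 + (g x)\<^sup>2" by simp
    show "norm (f x * g x) \<le> norm ((f x)\<^sup>2 + (g x)\<^sup>2)"
      unfolding h3 h4 using h1 h2 by linarith
  qed
qed

lemma L2fun_add: "L2fun f \<Longrightarrow> L2fun g \<Longrightarrow> L2fun (\<lambda>x. f x + g x)"
proof -
  assume a: "L2fun f" "L2fun g"
  have "integrable lborel (\<lambda>x. (f x)\<^sup>2 + (g x)\<^sup>2 + 2 * (f x * g x))"
    using L2_mult[OF a] a unfolding L2fun_def by auto
  moreover have "(\<lambda>x. f x + g x) \<in> borel_measurable lborel" using a unfolding L2fun_def by auto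
  ultimately show ?thesis using a unfolding L2fun_def power2_sum by (simp add: mult.assoc)
qed

lemma L2fun_cmult: "L2fun f \<Longrightarrow> L2fun (\<lambda>x. c * f x)"
  unfolding L2fun_def by (auto simp: power_mult_distrib)

lemma L2fun_diff: "L2fun f \<Longrightarrow> L2fun g \<Longrightarrow> L2fun (\<lambda>x. f x - g x)"
  using L2fun_add[of f "\<lambda>x. (-1) * g x"] L2fun_cmult[of g "-1"] by simp

lemma L2_set_integrable:
  assumes "L2fun f"
  shows "set_integrable lborel {a..b} f"
  unfolding set_integrable_def
proof (rule Bochner_Integration.integrable_bound[of _ "\<lambda>x. indicator {a..b} x + (f x)\<^sup>2"])
  have "set_integrable lborel {a..b} (\<lambda>_. 1::real)"
    by (rule borel_integrable_atLeastAtMost') auto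
  then show "integrable lborel (\<lambda>x. indicator {a..b} x + (f x)\<^sup>2 :: real)"
    using assms unfolding L2fun_def set_integrable_def by auto
  show "(\<lambda>x. indicat_real {a..b} x *\<^sub>R f x) \<in> borel_measurable lborel"
    using assms unfolding L2fun_def by auto
  show "AE x in lborel. norm (indicat_real {a..b} x *\<^sub>R f x) \<le> norm (indicator {a..b} x + (f x)\<^sup>2 :: real)"
  proof (rule AE_I2)
    fix x
    have "\<bar>f x\<bar> \<le> 1 + (f x)\<^sup>2"
    proof (cases "\<bar>f x\<bar> \<le> 1")
      case False
      then have "\<bar>f x\<bar> * 1 \<le> \<bar>f x\<bar> * \<bar>f x\<bar>" by (intro mult_left_mono) auto
      then show ?thesis by (simp add: power2_eq_square)
    qed (use zero_le_power2[of "f x"] in linarith)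
    then show "norm (indicat_real {a..b} x *\<^sub>R f x) \<le> norm (indicator {a..b} x + (f x)\<^sup>2 :: real)"
      by (auto simp: indicator_def)
  qed
qed

lemma L2_interval_integrable:
  assumes "L2fun f"
  shows "interval_lebesgue_integrable lborel (ereal a) (ereal b) f"
  unfolding interval_lebesgue_integrable_def
  using L2_set_integrable[OF assms, of a b] L2_set_integrable[OF assms, of b a]
  by (auto intro: set_integrable_subset simp: einterval_iff)

lemma AE_zero_intervals:
  fixes g :: "real \<Rightarrow> real"
  assumes meas[measurable]: "g \<in> borel_measurable borel"
    and loc: "\<And>a b. set_integrable lborel {a..b} g"
    and zero: "\<And>x::real. (LBINT t=0..ereal x. g t) = 0"
  shows "AE x in lborel. g x = 0"
proof -
  have iint: "interval_lebesgue_integrable lborel (ereal a) (ereal b) g" for a b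
    unfolding interval_lebesgue_integrable_def
    using loc[of a b] loc[of b a] by (auto intro: set_integrable_subset simp: einterval_iff)
  have Ioc0: "(LBINT t:{a<..b}. g t) = 0" for a b
  proof (cases "a \<le> b")
    case True
    have "(LBINT t=a..0. g t) + (LBINT t=0..b. g t) = (LBINT t=a..b. g t)"
      by (rule interval_integral_sum) (use iint[of 0 b] iint[of a 0] iint[of b 0] iint[of 0 a] iint[of a b] iint[of b a] in \<open>auto simp: min_def max_def zero_ereal_def\<close>)
    then have "(LBINT t=a..b. g t) = 0"
      using zero[of a] zero[of b] interval_integral_endpoints_reverse[of a 0 g] by simp
    then show ?thesis using interval_integral_Ioc[OF True, of g] by simp
  next
    case False
    then have "{a<..b} = {}" by auto
    then show ?thesis by (simp add: set_lebesgue_integral_def)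
  qed
  have Icc0: "(LBINT t:{a..b}. g t) = 0" if "a \<le> b" for a b
  proof -
    have "(LBINT t=a..0. g t) + (LBINT t=0..b. g t) = (LBINT t=a..b. g t)"
      by (rule interval_integral_sum) (use iint[of 0 b] iint[of a 0] iint[of b 0] iint[of 0 a] iint[of a b] iint[of b a] in \<open>auto simp: min_def max_def zero_ereal_def\<close>)
    then have "(LBINT t=a..b. g t) = 0"
      using zero[of a] zero[of b] interval_integral_endpoints_reverse[of a 0 g] by simp
    then show ?thesis using interval_integral_Icc[OF that, of g] by simp
  qed
  have n0: "AE x in lborel. indicator {-real n..real n} x * g x = 0" for n :: nat
  proof -
    define gn where "gn x = indicator {-real n..real n} x * g x" for x
    have gn_meas[measurable]: "gn \<in> borel_measurable borel" unfolding gn_def by measurable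
    have gn_int: "integrable lborel gn"
      using loc[of "-real n" "real n"] unfolding gn_def set_integrable_def by simp
    have gp_int: "integrable lborel (\<lambda>x. max 0 (gn x) * indicator {a<..} x)" for a
      by (rule Bochner_Integration.integrable_bound[OF integrable_abs[OF gn_int]])
         (auto simp: indicator_def)
    have gm_int: "integrable lborel (\<lambda>x. max 0 (- gn x) * indicator {a<..} x)" for a
      by (rule Bochner_Integration.integrable_bound[OF integrable_abs[OF gn_int]])
         (auto simp: indicator_def)
    have Ioi0: "(LINT x|lborel. gn x * indicator {a<..} x) = 0" for a
    proof (cases "a < - real n")
      case True
      have "(LINT x|lborel. gn x * indicator {a<..} x) = (LBINT t:{-real n..real n}. g t)"
        unfolding set_lebesgue_integral_def gn_def using True
        by (intro Bochner_Integration.integral_cong) (auto simp: indicator_def)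
      then show ?thesis using Icc0 by simp
    next
      case False
      have "(LINT x|lborel. gn x * indicator {a<..} x) = (LBINT t:{a<..real n}. g t)"
        unfolding set_lebesgue_integral_def gn_def using False
        by (intro Bochner_Integration.integral_cong) (auto simp: indicator_def)
      then show ?thesis using Ioc0 by simp
    qed
    let ?M = "density lborel (\<lambda>x. ennreal (max 0 (gn x)))"
    let ?N = "density lborel (\<lambda>x. ennreal (max 0 (- gn x)))"
    have em: "emeasure ?M {a<..} = ennreal (LINT x|lborel. max 0 (gn x) * indicator {a<..} x)"
      and en: "emeasure ?N {a<..} = ennreal (LINT x|lborel. max 0 (- gn x) * indicator {a<..} x)" for a
      by (auto simp: emeasure_density nn_integral_eq_integral[symmetric] gp_int gm_int
          intro!: nn_integral_cong simp flip: ennreal_mult' split: split_indicator)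
    have "?M = ?N"
    proof (rule measure_eqI_lessThan)
      show "sets ?M = sets borel" "sets ?N = sets borel" by auto
      show "emeasure ?M {x<..} < \<infinity>" for x using em by simp
      show "emeasure ?M {x<..} = emeasure ?N {x<..}" for x
      proof -
        have "(LINT y|lborel. max 0 (gn y) * indicator {x<..} y) - (LINT y|lborel. max 0 (- gn y) * indicator {x<..} y)
            = (LINT y|lborel. gn y * indicator {x<..} y)"
          unfolding Bochner_Integration.integral_diff[OF gp_int gm_int, symmetric]
          by (intro Bochner_Integration.integral_cong) (auto simp: max_def)
        then show ?thesis using em en Ioi0[of x] by simp
      qed
    qed
    then have "AE x in lborel. ennreal (max 0 (gn x)) = ennreal (max 0 (- gn x))"
      by (subst (asm) sigma_finite_measure.density_unique_iff[OF sigma_finite_lborel]) auto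
    then show ?thesis
      by (rule eventually_mono) (auto simp: gn_def max_def split: if_splits)
  qed
  have "AE x in lborel. \<forall>n::nat. indicator {-real n..real n} x * g x = 0"
    unfolding AE_all_countable using n0 by blast
  then show ?thesis
  proof (rule eventually_mono)
    fix x assume h: "\<forall>n::nat. indicator {-real n..real n} x * g x = 0"
    obtain n :: nat where "\<bar>x\<bar> \<le> real n" using real_arch_simple by blast
    then show "g x = 0" using h[rule_format, of n] by (auto simp: indicator_def)
  qed
qed

lemma DERIV_glue:
  fixes f g :: "real \<Rightarrow> real"
  assumes f: "(f has_real_derivative D) (at p)" and g: "(g has_real_derivative D) (at p)"
    and fg: "f p = g p"
  shows "((\<lambda>x. if x \<le> p then f x else g x) has_real_derivative D) (at p)"
proof -
  let ?F = "\<lambda>x. if x \<le> p then f x else g x"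
  have fl: "((\<lambda>y. (f y - f p) / (y - p)) \<longlongrightarrow> D) (at_left p)"
    using f unfolding has_field_derivative_iff filterlim_at_split by simp
  have gr: "((\<lambda>y. (g y - g p) / (y - p)) \<longlongrightarrow> D) (at_right p)"
    using g unfolding has_field_derivative_iff filterlim_at_split by simp
  have "((\<lambda>y. (?F y - ?F p) / (y - p)) \<longlongrightarrow> D) (at_left p)"
  proof (subst tendsto_cong)
    show "\<forall>\<^sub>F y in at_left p. (?F y - ?F p) / (y - p) = (f y - f p) / (y - p)"
      using eventually_at_left_real[of "p - 1" p, simplified] by (rule eventually_mono) auto
  qed (rule fl)
  moreover have "((\<lambda>y. (?F y - ?F p) / (y - p)) \<longlongrightarrow> D) (at_right p)"
  proof (subst tendsto_cong)
    show "\<forall>\<^sub>F y in at_right p. (?F y - ?F p) / (y - p) = (g y - g p) / (y - p)"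
      using eventually_at_right_real[of p "p + 1"] by (rule eventually_mono) (auto simp: fg)
  qed (rule gr)
  ultimately show ?thesis
    unfolding has_field_derivative_iff by (simp add: filterlim_at_split)
qed

definition sth :: "real \<Rightarrow> real" where "sth t = (if t \<le> 0 then 0 else 1)"
definition srp :: "real \<Rightarrow> real" where "srp t = (if t \<le> 0 then 0 else t)"
definition sqp :: "real \<Rightarrow> real" where "sqp t = (if t \<le> 0 then 0 else t\<^sup>2 / 2)"

lemma sqp_deriv: "(sqp has_real_derivative srp t) (at t)"
proof (cases t "0::real" rule: linorder_cases)
  case less
  show ?thesis
    by (rule has_field_derivative_transform_within_open[of "\<lambda>_. 0" _ _ "{..<0}"])
       (use less in \<open>auto simp: sqp_def srp_def\<close>)
next
  case equal
  have "((\<lambda>x. if x \<le> 0 then (\<lambda>_. 0) x else (\<lambda>x. x\<^sup>2/2) x) has_real_derivative 0) (at 0)"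
    by (rule DERIV_glue) (auto intro!: derivative_eq_intros)
  then show ?thesis using equal by (simp add: sqp_def[abs_def] srp_def)
next
  case greater
  show ?thesis
    by (rule has_field_derivative_transform_within_open[of "\<lambda>x. x\<^sup>2/2" _ _ "{0<..}"])
       (use greater in \<open>auto simp: sqp_def srp_def intro!: derivative_eq_intros\<close>)
qed

lemma srp_deriv: "t \<noteq> 0 \<Longrightarrow> (srp has_real_derivative sth t) (at t)"
proof (cases t "0::real" rule: linorder_cases)
  case less
  show ?thesis
    by (rule has_field_derivative_transform_within_open[of "\<lambda>_. 0" _ _ "{..<0}"])
       (use less in \<open>auto simp: sth_def srp_def\<close>)
next
  case greater
  show ?thesis
    by (rule has_field_derivative_transform_within_open[of "\<lambda>x. x" _ _ "{0<..}"])
       (use greater in \<open>auto simp: sth_def srp_def intro!: derivative_eq_intros\<close>)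
qed simp

lemma srp_cont: "continuous_on UNIV srp"
proof -
  have "srp = (\<lambda>t. max 0 t)" by (auto simp: srp_def)
  moreover have "continuous_on UNIV (\<lambda>t::real. max 0 t)" by (intro continuous_on_max continuous_on_const continuous_on_id)
  ultimately show ?thesis by simp
qed

lemma sqp_cont: "continuous_on UNIV sqp"
  using sqp_deriv by (meson DERIV_isCont continuous_at_imp_continuous_on)

lemma sth_meas[measurable]: "sth \<in> borel_measurable borel"
  unfolding sth_def by measurable
lemma srp_meas[measurable]: "srp \<in> borel_measurable borel"
  using srp_cont by (simp add: borel_measurable_continuous_onI)
lemma sqp_meas[measurable]: "sqp \<in> borel_measurable borel"
  using sqp_cont by (simp add: borel_measurable_continuous_onI)

lemma bdd_set_integrable:
  fixes f :: "real \<Rightarrow> real"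
  assumes [measurable]: "f \<in> borel_measurable borel" and bd: "\<And>x. \<bar>f x\<bar> \<le> C"
  shows "set_integrable lborel {a..b} f"
  unfolding set_integrable_def
proof (rule Bochner_Integration.integrable_bound[of _ "\<lambda>x. C * indicator {a..b} x"])
  have "set_integrable lborel {a..b} (\<lambda>_. C)"
    by (rule borel_integrable_atLeastAtMost') auto
  then show "integrable lborel (\<lambda>x. C * indicat_real {a..b} x)"
    unfolding set_integrable_def by (simp add: mult.commute)
  show "(\<lambda>x. indicat_real {a..b} x *\<^sub>R f x) \<in> borel_measurable lborel" by measurable
  show "AE x in lborel. norm (indicat_real {a..b} x *\<^sub>R f x) \<le> norm (C * indicat_real {a..b} x)"
    using bd[of 0] by (auto simp: indicator_def intro!: AE_I2 bd)
qed

lemma bdd_interval_integrable: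
  fixes f :: "real \<Rightarrow> real"
  assumes "f \<in> borel_measurable borel" and "\<And>x. \<bar>f x\<bar> \<le> C"
  shows "interval_lebesgue_integrable lborel (ereal a) (ereal b) f"
  unfolding interval_lebesgue_integrable_def
  using bdd_set_integrable[OF assms, of a b] bdd_set_integrable[OF assms, of b a]
  by (auto intro: set_integrable_subset simp: einterval_iff)

lemma sth_bdd: "\<bar>sth t\<bar> \<le> 1" by (simp add: sth_def)

lemma sth_int: "(LBINT t=ereal y..ereal x. sth (t - c)) = srp (x - c) - srp (y - c)"
proof -
  have ii: "interval_lebesgue_integrable lborel (ereal a) (ereal b) (\<lambda>t. sth (t - c))" for a b
    by (rule bdd_interval_integrable[where C=1]) (auto simp: sth_bdd)
  have half: "(LBINT t=ereal c..ereal x. sth (t - c)) = srp (x - c)" for x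
  proof -
    have "(LBINT t=ereal c..ereal x. sth (t - c)) = (LBINT t=ereal c..ereal x. (if c \<le> x then 1 else 0))"
      by (rule interval_integral_cong) (auto simp: einterval_iff sth_def min_def max_def split: if_splits)
    also have "\<dots> = srp (x - c)" by (auto simp: srp_def)
    finally show ?thesis .
  qed
  have "(LBINT t=ereal y..ereal c. sth (t - c)) + (LBINT t=ereal c..ereal x. sth (t - c)) = (LBINT t=ereal y..ereal x. sth (t - c))"
    by (rule interval_integral_sum) (use ii in \<open>auto simp: min_def max_def\<close>)
  moreover have "(LBINT t=ereal y..ereal c. sth (t - c)) = - srp (y - c)"
    using half[of y] interval_integral_endpoints_reverse[of "ereal y" "ereal c" "\<lambda>t. sth (t - c)"] by simp
  ultimately show ?thesis using half[of x] by simp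
qed

definition bsp :: "real \<Rightarrow> real \<Rightarrow> real \<Rightarrow> real" where
  "bsp a e x = sqp (x - a) - 3 * sqp (x - (a + e)) + 3 * sqp (x - (a + 2*e)) - sqp (x - (a + 3*e))"
definition bsp1 :: "real \<Rightarrow> real \<Rightarrow> real \<Rightarrow> real" where
  "bsp1 a e x = srp (x - a) - 3 * srp (x - (a + e)) + 3 * srp (x - (a + 2*e)) - srp (x - (a + 3*e))"
definition bsp2 :: "real \<Rightarrow> real \<Rightarrow> real \<Rightarrow> real" where
  "bsp2 a e x = sth (x - a) - 3 * sth (x - (a + e)) + 3 * sth (x - (a + 2*e)) - sth (x - (a + 3*e))"

lemma shift_deriv:
  assumes "(f has_real_derivative f') (at (x - c))"
  shows "((\<lambda>x. f (x - c)) has_real_derivative f') (at x)"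
  using assms DERIV_shift[of f f' x "-c"] by simp

lemma bsp_deriv: "(bsp a e has_real_derivative bsp1 a e x) (at x)"
proof -
  have d: "((\<lambda>x. sqp (x - c)) has_real_derivative srp (x - c)) (at x)" for c
    by (intro shift_deriv sqp_deriv)
  show ?thesis unfolding bsp_def[abs_def] bsp1_def
    by (intro DERIV_diff DERIV_add DERIV_cmult d)
qed

lemma bsp_cont: "continuous_on UNIV (bsp a e)"
  using bsp_deriv by (meson DERIV_isCont continuous_at_imp_continuous_on)

lemma bsp1_cont: "continuous_on UNIV (bsp1 a e)"
  unfolding bsp1_def[abs_def]
  by (intro continuous_intros continuous_on_compose2[OF srp_cont]) auto

lemma bsp_meas[measurable]: "bsp a e \<in> borel_measurable borel"
  using bsp_cont by (simp add: borel_measurable_continuous_onI)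
lemma bsp1_meas[measurable]: "bsp1 a e \<in> borel_measurable borel"
  using bsp1_cont by (simp add: borel_measurable_continuous_onI)
lemma bsp2_meas[measurable]: "bsp2 a e \<in> borel_measurable borel"
  unfolding bsp2_def[abs_def] by measurable

lemma bsp_supp:
  assumes "e > 0" "x \<notin> {a..a+3*e}"
  shows "bsp a e x = 0" "bsp1 a e x = 0" "bsp2 a e x = 0"
proof -
  consider "x < a" | "x > a + 3*e" using assms by auto
  then have "bsp a e x = 0 \<and> bsp1 a e x = 0 \<and> bsp2 a e x = 0"
  proof cases
    case 1 then show ?thesis using assms
      by (auto simp: bsp_def bsp1_def bsp2_def sqp_def srp_def sth_def)
  next
    case 2 then show ?thesis using assms
      by (auto simp: bsp_def bsp1_def bsp2_def sqp_def srp_def sth_def power2_eq_square algebra_simps) (auto simp: field_simps)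
  qed
  then show "bsp a e x = 0" "bsp1 a e x = 0" "bsp2 a e x = 0" by auto
qed

lemma L2_bdd_supp:
  fixes f :: "real \<Rightarrow> real"
  assumes [measurable]: "f \<in> borel_measurable borel"
    and supp: "\<And>x. x \<notin> {A..B} \<Longrightarrow> f x = 0" and bd: "\<And>x. \<bar>f x\<bar> \<le> C"
  shows "L2fun f"
  unfolding L2fun_def
proof
  show "f \<in> borel_measurable lborel" by simp
  have "set_integrable lborel {A..B} (\<lambda>x. (f x)\<^sup>2)"
  proof (rule bdd_set_integrable[where C="C\<^sup>2"])
    show "\<bar>(f x)\<^sup>2\<bar> \<le> C\<^sup>2" for x
      using power_mono[OF bd[of x] abs_ge_zero, of 2] by simp
  qed measurable
  moreover have "(\<lambda>x. indicat_real {A..B} x *\<^sub>R (f x)\<^sup>2) = (\<lambda>x. (f x)\<^sup>2)"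
    using supp by (auto simp: indicator_def fun_eq_iff)
  ultimately show "integrable lborel (\<lambda>x. (f x)\<^sup>2)" unfolding set_integrable_def by simp
qed

lemma LINT_supp:
  fixes f :: "real \<Rightarrow> real"
  assumes supp: "\<And>x. x \<notin> {A..B} \<Longrightarrow> f x = 0" and "A \<le> B"
  shows "(LINT x|lborel. f x) = (LBINT x=ereal A..ereal B. f x)"
proof -
  have "(LBINT x=ereal A..ereal B. f x) = (LBINT x:{A..B}. f x)" by (rule interval_integral_Icc) fact
  also have "\<dots> = (LINT x|lborel. f x)"
    unfolding set_lebesgue_integral_def
    by (rule Bochner_Integration.integral_cong) (use supp in \<open>auto simp: indicator_def\<close>)
  finally show ?thesis by simp
qed

lemma bsp_bdd:
  assumes "e > 0"
  shows "\<exists>C. \<forall>x. \<bar>bsp a e x\<bar> \<le> C" "\<exists>C. \<forall>x. \<bar>bsp1 a e x\<bar> \<le> C" "\<bar>bsp2 a e x\<bar> \<le> 8"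
proof -
  have "compact (bsp a e ` {a..a+3*e})"
    by (rule compact_continuous_image) (auto intro: continuous_on_subset[OF bsp_cont])
  then obtain C where C: "\<forall>y\<in>bsp a e ` {a..a+3*e}. norm y \<le> C"
    using compact_imp_bounded bounded_iff by metis
  show "\<exists>C. \<forall>x. \<bar>bsp a e x\<bar> \<le> C"
  proof (intro exI[of _ "max C 0"] allI)
    fix x show "\<bar>bsp a e x\<bar> \<le> max C 0"
      using C bsp_supp[OF assms, of x] by (cases "x \<in> {a..a+3*e}") force+
  qed
  have "compact (bsp1 a e ` {a..a+3*e})"
    by (rule compact_continuous_image) (auto intro: continuous_on_subset[OF bsp1_cont])
  then obtain C1 where C1: "\<forall>y\<in>bsp1 a e ` {a..a+3*e}. norm y \<le> C1"
    using compact_imp_bounded bounded_iff by metis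
  show "\<exists>C. \<forall>x. \<bar>bsp1 a e x\<bar> \<le> C"
  proof (intro exI[of _ "max C1 0"] allI)
    fix x show "\<bar>bsp1 a e x\<bar> \<le> max C1 0"
      using C1 bsp_supp[OF assms, of x] by (cases "x \<in> {a..a+3*e}") force+
  qed
  show "\<bar>bsp2 a e x\<bar> \<le> 8" by (auto simp: bsp2_def sth_def)
qed

lemma bsp_L2:
  assumes "e > 0"
  shows "L2fun (bsp a e)" "L2fun (bsp1 a e)" "L2fun (bsp2 a e)"
proof -
  obtain C where "\<forall>x. \<bar>bsp a e x\<bar> \<le> C" using bsp_bdd[OF assms] by blast
  then show "L2fun (bsp a e)" by (intro L2_bdd_supp[where A=a and B="a+3*e" and C=C]) (auto simp: bsp_supp[OF assms])
  obtain C1 where "\<forall>x. \<bar>bsp1 a e x\<bar> \<le> C1" using bsp_bdd[OF assms] by blast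
  then show "L2fun (bsp1 a e)" by (intro L2_bdd_supp[where A=a and B="a+3*e" and C=C1]) (auto simp: bsp_supp[OF assms])
  show "L2fun (bsp2 a e)" by (intro L2_bdd_supp[where A=a and B="a+3*e" and C=8]) (auto simp: bsp_supp[OF assms] bsp_bdd[OF assms])
qed

lemma bsp_d2:
  assumes "e > 0"
  shows "is_d2 (bsp a e) (bsp2 a e)"
  unfolding is_d2_def
proof (intro exI[of _ "bsp1 a e"] conjI allI)
  show "(bsp a e has_real_derivative bsp1 a e x) (at x)" for x by (rule bsp_deriv)
  show "L2fun (bsp1 a e)" using bsp_L2[OF assms] by simp
  fix x
  have ii: "interval_lebesgue_integrable lborel (ereal 0) (ereal x) (\<lambda>t. sth (t - c))" for c
    by (rule bdd_interval_integrable[where C=1]) (auto simp: sth_bdd)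
  have "(LBINT t=ereal 0..ereal x. bsp2 a e t) =
     (LBINT t=ereal 0..ereal x. sth (t - a)) - 3 * (LBINT t=ereal 0..ereal x. sth (t - (a+e)))
      + 3 * (LBINT t=ereal 0..ereal x. sth (t - (a+2*e))) - (LBINT t=ereal 0..ereal x. sth (t - (a+3*e)))"
    unfolding bsp2_def using ii by simp
  then show "bsp1 a e x = bsp1 a e 0 + (LBINT t=0..x. bsp2 a e t)"
    unfolding sth_int zero_ereal_def by (simp add: bsp1_def)
qed

definition D3 :: "(real \<Rightarrow> real) \<Rightarrow> real \<Rightarrow> real \<Rightarrow> real" where
  "D3 F a e = F a - 3 * F (a + e) + 3 * F (a + 2*e) - F (a + 3*e)"

lemma cont_interval_integrable:
  fixes f :: "real \<Rightarrow> real"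
  assumes "continuous_on UNIV f"
  shows "interval_lebesgue_integrable lborel (ereal A) (ereal B) f"
  by (rule interval_integrable_isCont) (use assms in \<open>auto simp: continuous_on_eq_continuous_at\<close>)

lemma int_split_zero:
  fixes f :: "real \<Rightarrow> real"
  assumes ii: "interval_lebesgue_integrable lborel (ereal A) (ereal B) f"
    and "A \<le> c" "c \<le> B" and z: "\<And>x. x < c \<Longrightarrow> f x = 0"
  shows "(LBINT x=ereal A..ereal B. f x) = (LBINT x=ereal c..ereal B. f x)"
proof -
  have "(LBINT x=ereal A..ereal c. f x) + (LBINT x=ereal c..ereal B. f x) = (LBINT x=ereal A..ereal B. f x)"
    by (rule interval_integral_sum) (use ii assms in \<open>auto simp: min_def max_def\<close>)
  moreover have "(LBINT x=ereal A..ereal c. f x) = (LBINT x=ereal A..ereal c. 0)"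
    by (rule interval_integral_cong) (use assms in \<open>auto simp: einterval_iff min_def max_def\<close>)
  ultimately show ?thesis by simp
qed

lemma comb4:
  fixes f0 f1 f2 f3 :: "real \<Rightarrow> real"
  assumes "interval_lebesgue_integrable lborel A B f0" "interval_lebesgue_integrable lborel A B f1"
    "interval_lebesgue_integrable lborel A B f2" "interval_lebesgue_integrable lborel A B f3"
  shows "(LBINT x=A..B. f0 x - 3 * f1 x + 3 * f2 x - f3 x) =
     (LBINT x=A..B. f0 x) - 3 * (LBINT x=A..B. f1 x) + 3 * (LBINT x=A..B. f2 x) - (LBINT x=A..B. f3 x)"
  using assms by simp

locale anti3 =
  fixes \<phi> F1 F2 F3 :: "real \<Rightarrow> real"
  assumes cphi: "continuous_on UNIV \<phi>"
    and d1: "\<And>x. (F1 has_real_derivative \<phi> x) (at x)"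
    and d2: "\<And>x. (F2 has_real_derivative F1 x) (at x)"
    and d3: "\<And>x. (F3 has_real_derivative F2 x) (at x)"
begin

lemma int_q:
  assumes "A \<le> c" "c \<le> B"
  shows "(LBINT x=ereal A..ereal B. \<phi> x * sqp (x - c)) = F1 B * (B-c)\<^sup>2/2 - F2 B * (B - c) + F3 B - F3 c"
proof -
  have cont: "continuous_on UNIV (\<lambda>x. \<phi> x * sqp (x - c))"
    by (intro continuous_intros cphi continuous_on_compose2[OF sqp_cont]) auto
  have "(LBINT x=ereal A..ereal B. \<phi> x * sqp (x - c)) = (LBINT x=ereal c..ereal B. \<phi> x * sqp (x - c))"
    by (rule int_split_zero[OF cont_interval_integrable[OF cont]]) (use assms in \<open>auto simp: sqp_def\<close>)
  also have "\<dots> = (\<lambda>x. F1 x * (x-c)\<^sup>2/2 - F2 x * (x - c) + F3 x) B - (\<lambda>x. F1 x * (x-c)\<^sup>2/2 - F2 x * (x - c) + F3 x) c"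
  proof (rule interval_integral_FTC_finite)
    show "continuous_on {min c B..max c B} (\<lambda>x. \<phi> x * sqp (x - c))"
      using cont by (rule continuous_on_subset) auto
    fix x assume x: "min c B \<le> x" "x \<le> max c B"
    have dq: "((\<lambda>x. (x-c)\<^sup>2/2) has_real_derivative (x-c)) (at x)"
      by (auto intro!: derivative_eq_intros)
    have dl: "((\<lambda>x. x - c) has_real_derivative 1) (at x)"
      by (auto intro!: derivative_eq_intros)
    have dd: "((\<lambda>x. F1 x * ((x-c)\<^sup>2/2) - F2 x * (x - c) + F3 x) has_real_derivative
        \<phi> x * ((x-c)\<^sup>2/2) + F1 x * (x - c) - (F1 x * (x - c) + F2 x * 1) + F2 x) (at x)"
      using DERIV_add[OF DERIV_diff[OF DERIV_mult[OF d1 dq] DERIV_mult[OF d2 dl]] d3] by (simp add: algebra_simps)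
    have eq: "\<phi> x * ((x-c)\<^sup>2/2) + F1 x * (x - c) - (F1 x * (x - c) + F2 x * 1) + F2 x = \<phi> x * sqp (x - c)"
      using x assms by (auto simp: sqp_def min_def max_def)
    have "((\<lambda>x. F1 x * ((x-c)\<^sup>2/2) - F2 x * (x - c) + F3 x) has_real_derivative \<phi> x * sqp (x - c)) (at x)"
      using dd unfolding eq .
    then show "((\<lambda>x. F1 x * (x-c)\<^sup>2/2 - F2 x * (x - c) + F3 x) has_vector_derivative \<phi> x * sqp (x - c)) (at x within {min c B..max c B})"
      by (simp add: has_real_derivative_iff_has_vector_derivative[symmetric] has_field_derivative_at_within)
  qed
  finally show ?thesis by simp
qed

lemma int_r:
  assumes "A \<le> c" "c \<le> B"
  shows "(LBINT x=ereal A..ereal B. \<phi> x * srp (x - c)) = F1 B * (B - c) - F2 B + F2 c"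
proof -
  have cont: "continuous_on UNIV (\<lambda>x. \<phi> x * srp (x - c))"
    by (intro continuous_intros cphi continuous_on_compose2[OF srp_cont]) auto
  have "(LBINT x=ereal A..ereal B. \<phi> x * srp (x - c)) = (LBINT x=ereal c..ereal B. \<phi> x * srp (x - c))"
    by (rule int_split_zero[OF cont_interval_integrable[OF cont]]) (use assms in \<open>auto simp: srp_def\<close>)
  also have "\<dots> = (\<lambda>x. F1 x * (x-c) - F2 x) B - (\<lambda>x. F1 x * (x-c) - F2 x) c"
  proof (rule interval_integral_FTC_finite)
    show "continuous_on {min c B..max c B} (\<lambda>x. \<phi> x * srp (x - c))"
      using cont by (rule continuous_on_subset) auto
    fix x assume x: "min c B \<le> x" "x \<le> max c B"
    have dl: "((\<lambda>x. x - c) has_real_derivative 1) (at x)"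
      by (auto intro!: derivative_eq_intros)
    have dd: "((\<lambda>x. F1 x * (x-c) - F2 x) has_real_derivative \<phi> x * (x-c) + F1 x * 1 - F1 x) (at x)"
      using DERIV_diff[OF DERIV_mult[OF d1 dl] d2] by (simp add: algebra_simps)
    have eq: "\<phi> x * (x-c) + F1 x * 1 - F1 x = \<phi> x * srp (x - c)"
      using x assms by (auto simp: srp_def min_def max_def)
    have "((\<lambda>x. F1 x * (x-c) - F2 x) has_real_derivative \<phi> x * srp (x - c)) (at x)"
      using dd unfolding eq .
    then show "((\<lambda>x. F1 x * (x-c) - F2 x) has_vector_derivative \<phi> x * srp (x - c)) (at x within {min c B..max c B})"
      by (simp add: has_real_derivative_iff_has_vector_derivative[symmetric] has_field_derivative_at_within)
  qed
  finally show ?thesis by simp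
qed

lemma int_bsp:
  assumes "e > 0"
  shows "(LINT x|lborel. \<phi> x * bsp a e x) = - D3 F3 a e"
proof -
  let ?B = "a + 3*e"
  have cq: "interval_lebesgue_integrable lborel (ereal a) (ereal ?B) (\<lambda>x. \<phi> x * sqp (x - c))" for c
    by (intro cont_interval_integrable continuous_intros cphi continuous_on_compose2[OF sqp_cont]) auto
  have "(LINT x|lborel. \<phi> x * bsp a e x) = (LBINT x=ereal a..ereal ?B. \<phi> x * bsp a e x)"
    by (rule LINT_supp) (use assms bsp_supp[OF assms] in auto)
  also have "\<dots> = (LBINT x=ereal a..ereal ?B. \<phi> x * sqp (x - a)) - 3 * (LBINT x=ereal a..ereal ?B. \<phi> x * sqp (x - (a+e)))
     + 3 * (LBINT x=ereal a..ereal ?B. \<phi> x * sqp (x - (a+2*e))) - (LBINT x=ereal a..ereal ?B. \<phi> x * sqp (x - (a+3*e)))"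
    unfolding bsp_def distrib_left right_diff_distrib mult.left_commute[of "\<phi> _" 3]
    by (rule comb4[OF cq cq cq cq])
  also have "\<dots> = - D3 F3 a e"
    using assms by (simp add: int_q D3_def power2_eq_square algebra_simps)
  finally show ?thesis .
qed

lemma int_bsp1:
  assumes "e > 0"
  shows "(LINT x|lborel. \<phi> x * bsp1 a e x) = D3 F2 a e"
proof -
  let ?B = "a + 3*e"
  have cq: "interval_lebesgue_integrable lborel (ereal a) (ereal ?B) (\<lambda>x. \<phi> x * srp (x - c))" for c
    by (intro cont_interval_integrable continuous_intros cphi continuous_on_compose2[OF srp_cont]) auto
  have "(LINT x|lborel. \<phi> x * bsp1 a e x) = (LBINT x=ereal a..ereal ?B. \<phi> x * bsp1 a e x)"
    by (rule LINT_supp) (use assms bsp_supp[OF assms] in auto)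
  also have "\<dots> = (LBINT x=ereal a..ereal ?B. \<phi> x * srp (x - a)) - 3 * (LBINT x=ereal a..ereal ?B. \<phi> x * srp (x - (a+e)))
     + 3 * (LBINT x=ereal a..ereal ?B. \<phi> x * srp (x - (a+2*e))) - (LBINT x=ereal a..ereal ?B. \<phi> x * srp (x - (a+3*e)))"
    unfolding bsp1_def distrib_left right_diff_distrib mult.left_commute[of "\<phi> _" 3]
    by (rule comb4[OF cq cq cq cq])
  also have "\<dots> = D3 F2 a e"
    using assms by (simp add: int_r D3_def algebra_simps)
  finally show ?thesis .
qed

end

lemma L2fun_mult_bdd:
  assumes "L2fun f" and [measurable]: "g \<in> borel_measurable borel" and bd: "\<And>x. \<bar>g x\<bar> \<le> C"
  shows "L2fun (\<lambda>x. f x * g x)"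
  unfolding L2fun_def
proof
  have [measurable]: "f \<in> borel_measurable borel" using assms(1) unfolding L2fun_def by simp
  show "(\<lambda>x. f x * g x) \<in> borel_measurable lborel" by measurable
  show "integrable lborel (\<lambda>x. (f x * g x)\<^sup>2)"
  proof (rule Bochner_Integration.integrable_bound[of _ "\<lambda>x. C\<^sup>2 * (f x)\<^sup>2"])
    show "integrable lborel (\<lambda>x. C\<^sup>2 * (f x)\<^sup>2)" using assms(1) unfolding L2fun_def by simp
    show "(\<lambda>x. (f x * g x)\<^sup>2) \<in> borel_measurable lborel" using assms(1) unfolding L2fun_def by simp
    show "AE x in lborel. norm ((f x * g x)\<^sup>2) \<le> norm (C\<^sup>2 * (f x)\<^sup>2)"
    proof (rule AE_I2)
      fix x
      have "(g x)\<^sup>2 \<le> C\<^sup>2" using power_mono[OF bd[of x] abs_ge_zero, of 2] by simp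
      then have "(g x)\<^sup>2 * (f x)\<^sup>2 \<le> C\<^sup>2 * (f x)\<^sup>2" by (rule mult_right_mono) simp
      then show "norm ((f x * g x)\<^sup>2) \<le> norm (C\<^sup>2 * (f x)\<^sup>2)" by (simp add: power_mult_distrib mult.commute)
    qed
  qed
qed

lemma w_int:
  fixes u1 w :: "real \<Rightarrow> real"
  assumes "L2fun w" "\<forall>x. u1 x = u1 0 + (LBINT t=0..x. w t)"
  shows "(LBINT x=ereal c..ereal B. w x) = u1 B - u1 c"
proof -
  have "(LBINT x=ereal 0..ereal c. w x) + (LBINT x=ereal c..ereal B. w x) = (LBINT x=ereal 0..ereal B. w x)"
    by (rule interval_integral_sum) (use L2_interval_integrable[OF assms(1)] in \<open>auto simp: min_def max_def\<close>)
  moreover have "u1 B = u1 0 + (LBINT x=ereal 0..ereal B. w x)"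
    using assms(2)[rule_format, of B] by (simp only: zero_ereal_def)
  moreover have "u1 c = u1 0 + (LBINT x=ereal 0..ereal c. w x)"
    using assms(2)[rule_format, of c] by (simp only: zero_ereal_def)
  ultimately show ?thesis by linarith
qed

lemma int_bsp2:
  fixes u1 w :: "real \<Rightarrow> real"
  assumes w: "L2fun w" and u1: "\<forall>x. u1 x = u1 0 + (LBINT t=0..x. w t)" and e: "e > 0"
  shows "(LINT x|lborel. w x * bsp2 a e x) = - D3 u1 a e"
proof -
  let ?B = "a + 3*e"
  have cq: "interval_lebesgue_integrable lborel (ereal a) (ereal ?B) (\<lambda>x. w x * sth (x - c))" for c
    by (rule L2_interval_integrable, rule L2fun_mult_bdd[OF w _ sth_bdd]) measurable
  have each: "(LBINT x=ereal a..ereal ?B. w x * sth (x - c)) = u1 ?B - u1 c" if "a \<le> c" "c \<le> ?B" for c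
  proof -
    have "(LBINT x=ereal a..ereal ?B. w x * sth (x - c)) = (LBINT x=ereal c..ereal ?B. w x * sth (x - c))"
      by (rule int_split_zero[OF cq]) (use that in \<open>auto simp: sth_def\<close>)
    also have "\<dots> = (LBINT x=ereal c..ereal ?B. w x)"
      by (rule interval_integral_cong) (use that in \<open>auto simp: einterval_iff sth_def min_def max_def\<close>)
    finally show ?thesis using w_int[OF w u1] by simp
  qed
  have "(LINT x|lborel. w x * bsp2 a e x) = (LBINT x=ereal a..ereal ?B. w x * bsp2 a e x)"
    by (rule LINT_supp) (use e bsp_supp[OF e] in auto)
  also have "\<dots> = (LBINT x=ereal a..ereal ?B. w x * sth (x - a)) - 3 * (LBINT x=ereal a..ereal ?B. w x * sth (x - (a+e)))
     + 3 * (LBINT x=ereal a..ereal ?B. w x * sth (x - (a+2*e))) - (LBINT x=ereal a..ereal ?B. w x * sth (x - (a+3*e)))"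
    unfolding bsp2_def distrib_left right_diff_distrib mult.left_commute[of "w _" 3]
    by (rule comb4[OF cq cq cq cq])
  also have "\<dots> = - D3 u1 a e"
  proof -
    have e0: "(LBINT x=ereal a..ereal ?B. w x * sth (x - a)) = u1 ?B - u1 a" by (rule each) (use e in auto)
    have e1: "(LBINT x=ereal a..ereal ?B. w x * sth (x - (a+e))) = u1 ?B - u1 (a+e)" by (rule each) (use e in auto)
    have e2: "(LBINT x=ereal a..ereal ?B. w x * sth (x - (a+2*e))) = u1 ?B - u1 (a+2*e)" by (rule each) (use e in auto)
    have e3: "(LBINT x=ereal a..ereal ?B. w x * sth (x - (a+3*e))) = u1 ?B - u1 (a+3*e)" by (rule each) (use e in auto)
    show ?thesis unfolding e0 e1 e2 e3 D3_def by (simp add: algebra_simps)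
  qed
  finally show ?thesis .
qed

lemma seq3:
  fixes s :: "nat \<Rightarrow> real"
  assumes rec: "\<And>k. s (k+3) = 3* s (k+2) - 3* s (k+1) + s k"
  shows "s k = s 0 + real k*(s 1 - s 0) + real k*(real k-1)/2*(s 2 - 2* s 1 + s 0)"
proof -
  define f where "f k = s 0 + real k*(s 1 - s 0) + real k*(real k-1)/2*(s 2 - 2* s 1 + s 0)" for k
  define t where "t k = s k - f k" for k
  have frec: "f (k+3) = 3* f (k+2) - 3* f (k+1) + f k" for k
    unfolding f_def by (simp add: algebra_simps divide_simps)
  have "t k = 0 \<and> t (k+1) = 0 \<and> t (k+2) = 0" for k
  proof (induction k)
    case 0 then show ?case by (simp add: t_def f_def numeral_2_eq_2 field_simps)
  next
    case (Suc k)
    have "t (k+3) = 3 * t (k+2) - 3 * t (k+1) + t k" unfolding t_def using rec[of k] frec[of k] by simp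
    then have h: "t (k+3) = 0" using Suc.IH by simp
    have e1: "Suc k = k+1" and e2: "Suc k + 1 = k + 2" and e3: "Suc k + 2 = k+3" by simp_all
    have a1: "t (Suc k) = 0" using Suc.IH unfolding e1 by blast
    have a2: "t (Suc k + 1) = 0" using Suc.IH unfolding e2 by blast
    have a3: "t (Suc k + 2) = 0" using h unfolding e3 by blast
    show ?case using a1 a2 a3 by blast
  qed
  then have "t k = 0" by blast
  then show ?thesis unfolding t_def f_def by linarith
qed

lemma seq3_zero:
  fixes s :: "nat \<Rightarrow> real"
  assumes rec: "\<And>k. s (k+3) = 3* s (k+2) - 3* s (k+1) + s k"
    and z: "s 0 = 0" "s m = 0" "s (2*m) = 0" and m: "m > 0"
  shows "s k = 0"
proof -
  define A where "A = s 1 - s 0"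
  define B where "B = s 2 - 2* s 1 + s 0"
  have f: "s k = real k * A + real k*(real k - 1)/2 * B" for k
    using seq3[OF rec, of k] z unfolding A_def B_def by simp
  have 1: "real m * A + real m * (real m - 1)/2 * B = 0" using f[of m] z by simp
  have 2: "2 * real m * A + 2 * real m * (2 * real m - 1)/2 * B = 0" using f[of "2*m"] z by simp
  have a: "2*(real m*A) = real m * B - real m*real m*B" using 1 by (simp add: field_simps)
  have b: "4*(real m*A) + 4*(real m*real m*B) = 2*(real m*B)" using 2 by (simp add: field_simps)
  have "real m * real m * B = 0" using a b by linarith
  then have B0: "B = 0" using m by simp
  then have "A = 0" using 1 m by simp
  then show ?thesis using f[of k] B0 by simp
qed

lemma D3_zero_quadratic:
  fixes G :: "real \<Rightarrow> real"
  assumes cont: "continuous_on UNIV G"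
    and rel: "\<And>a e. e > 0 \<Longrightarrow> D3 G a e = 0"
  shows "\<exists>\<alpha> \<beta> \<gamma>. \<forall>x. G x = \<alpha> + \<beta>*x + \<gamma>*x\<^sup>2"
proof -
  define \<gamma> where "\<gamma> = (G 2 - 2 * G 1 + G 0)/2"
  define \<beta> where "\<beta> = G 1 - G 0 - \<gamma>"
  define L where "L x = G x - (G 0 + \<beta>*x + \<gamma>*x\<^sup>2)" for x
  have Lrel: "D3 L a e = 0" if "e > 0" for a e
    using rel[OF that, of a] unfolding D3_def L_def by (simp add: algebra_simps power2_eq_square)
  have L012: "L 0 = 0" "L 1 = 0" "L 2 = 0"
    unfolding L_def \<beta>_def \<gamma>_def by (simp_all add: power2_eq_square field_simps)
  have Lnat: "L (real k / real m) = 0" if "m > 0" for k m :: nat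
  proof -
    define s where "s i = L (real i / real m)" for i
    have rec: "s (i+3) = 3 * s (i+2) - 3 * s (i+1) + s i" for i
    proof -
      have D: "D3 L (real i / real m) (1 / real m) = 0" using Lrel that by simp
      have eqs: "real i / real m + 1 / real m = real (i+1) / real m"
        "real i / real m + 2 * (1 / real m) = real (i+2) / real m"
        "real i / real m + 3 * (1 / real m) = real (i+3) / real m"
        using that by (simp_all add: field_simps)
      have "L (real i / real m) - 3 * L (real (i+1) / real m) + 3 * L (real (i+2) / real m) - L (real (i+3) / real m) = 0"
        using D unfolding D3_def eqs .
      then show ?thesis unfolding s_def by linarith
    qed
    have z: "s 0 = 0" "s m = 0" "s (2*m) = 0" unfolding s_def using L012 that by simp_all
    show ?thesis using seq3_zero[OF rec z that, of k] unfolding s_def .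
  qed
  have Lint: "L ((real j - real k) / real m) = 0" if "m > 0" for j k m :: nat
  proof (induction k arbitrary: j)
    case 0 then show ?case using Lnat[OF that] by simp
  next
    case (Suc k)
    have D: "D3 L ((real j - real (Suc k)) / real m) (1 / real m) = 0" using Lrel that by simp
    have eqs: "(real j - real (Suc k)) / real m + 1 / real m = (real j - real k) / real m"
      "(real j - real (Suc k)) / real m + 2 * (1 / real m) = (real (j+1) - real k) / real m"
      "(real j - real (Suc k)) / real m + 3 * (1 / real m) = (real (j+2) - real k) / real m"
      using that by (simp_all add: field_simps)
    have "L ((real j - real (Suc k)) / real m) - 3 * L ((real j - real k) / real m) + 3 * L ((real (j+1) - real k) / real m) - L ((real (j+2) - real k) / real m) = 0"
      using D unfolding D3_def eqs .
    then show ?case using Suc.IH[of j] Suc.IH[of "j+1"] Suc.IH[of "j+2"] by linarith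
  qed
  have Lrat: "L q = 0" if q: "q \<in> \<rat>" for q
  proof -
    obtain p b :: int where pb: "b > 0" "q = of_int p / of_int b"
      using Rats_cases'[OF q] by metis
    obtain j k :: nat where jk: "p = int j - int k"
      by (rule that[of "nat p" "nat (-p)"]) simp
    obtain n :: nat where n: "b = int n" using pb(1) zero_le_imp_eq_int by force
    have q': "q = (real j - real k) / real n" using pb jk n by simp
    have "L ((real j - real k) / real n) = 0" by (rule Lint) (use pb n in simp)
    then show ?thesis unfolding q' .
  qed
  have contL: "continuous_on UNIV L"
    unfolding L_def by (intro continuous_intros cont)
  have L0: "L x = 0" for x
  proof (rule continuous_constant_on_closure[where S="\<rat>" and f=L and a=0])
    show "continuous_on (closure \<rat>) L" using contL by (simp add: Rats_closure_real)
    show "y \<in> \<rat> \<Longrightarrow> L y = 0" for y by (rule Lrat)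
    show "x \<in> closure \<rat>" by (simp add: Rats_closure_real)
  qed
  have "\<forall>x. G x = G 0 + \<beta>*x + \<gamma>*x\<^sup>2"
  proof
    fix x show "G x = G 0 + \<beta>*x + \<gamma>*x\<^sup>2" using L0[of x] unfolding L_def by linarith
  qed
  then show ?thesis by blast
qed

lemma exists_small_square:
  fixes u :: "real \<Rightarrow> real"
  assumes "integrable lborel (\<lambda>x. (u x)\<^sup>2)"
  shows "\<exists>y. (u y)\<^sup>2 < 1"
proof (rule ccontr)
  assume "\<not> ?thesis"
  then have ge: "\<forall>y. 1 \<le> (u y)\<^sup>2" by (simp add: not_less)
  have "integrable lborel (\<lambda>_::real. 1::real)"
    by (rule Bochner_Integration.integrable_bound[OF assms]) (use ge in auto)
  then have "(\<integral>\<^sup>+ x. ennreal (norm (1::real)) \<partial>(lborel::real measure)) < \<infinity>"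
    by (simp add: integrable_iff_bounded)
  then show False by simp
qed

lemma H1_bounded:
  fixes u u1 :: "real \<Rightarrow> real"
  assumes u: "L2fun u" and u1: "L2fun u1" and d: "\<And>x. (u has_real_derivative u1 x) (at x)"
  shows "\<exists>R. \<forall>x. \<bar>u x\<bar> \<le> R"
proof -
  define g where "g t = 2 * (u t * u1 t)" for t
  have gint: "integrable lborel g" unfolding g_def using L2_mult[OF u u1] by simp
  define S where "S = (LINT t|lborel. \<bar>g t\<bar>)"
  have S0: "0 \<le> S" unfolding S_def by simp
  have dg: "((\<lambda>t. (u t)\<^sup>2) has_real_derivative g t) (at t)" for t
    unfolding g_def using DERIV_power[OF d, of 2] by (simp add: algebra_simps)
  have diff: "\<bar>(u b)\<^sup>2 - (u a)\<^sup>2\<bar> \<le> S" if "a \<le> b" for a b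
  proof -
    have "(g has_integral ((u b)\<^sup>2 - (u a)\<^sup>2)) {a..b}"
      by (rule fundamental_theorem_of_calculus[OF that])
         (auto simp: has_real_derivative_iff_has_vector_derivative[symmetric] intro: has_field_derivative_at_within dg)
    moreover have si: "set_integrable lborel {a..b} g"
      using gint unfolding set_integrable_def by (rule integrable_mult_indicator[rotated]) simp
    ultimately have "(LINT t:{a..b}|lborel. g t) = (u b)\<^sup>2 - (u a)\<^sup>2"
      using set_borel_integral_eq_integral(2)[OF si] by (simp add: integral_unique)
    moreover have "norm (LINT t:{a..b}|lborel. g t) \<le> (LINT t:{a..b}|lborel. norm (g t))"
      by (rule set_integral_norm_bound[OF si])
    moreover have "(LINT t:{a..b}|lborel. norm (g t)) \<le> S"
    proof -
      have i0: "integrable lborel (\<lambda>x. \<bar>g x\<bar>)" using gint by simp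
      have i1: "integrable lborel (\<lambda>x. indicator {a..b} x *\<^sub>R \<bar>g x\<bar>)"
        by (rule integrable_mult_indicator[OF _ i0]) simp
      show ?thesis
        unfolding S_def set_lebesgue_integral_def real_norm_def
        by (rule integral_mono[OF i1 i0]) (auto simp: indicator_def)
    qed
    ultimately show ?thesis by simp
  qed
  obtain y where y: "(u y)\<^sup>2 < 1" using exists_small_square u unfolding L2fun_def by blast
  have "\<bar>u x\<bar> \<le> 1 + S" for x
  proof -
    have "(u x)\<^sup>2 \<le> 1 + S"
      using diff[of x y] diff[of y x] y by (cases "x \<le> y") auto
    moreover have "\<bar>u x\<bar> \<le> max 1 ((u x)\<^sup>2)"
    proof (cases "\<bar>u x\<bar> \<le> 1")
      case False
      then have "\<bar>u x\<bar> * 1 \<le> \<bar>u x\<bar> * \<bar>u x\<bar>" by (intro mult_left_mono) auto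
      then show ?thesis by (simp add: power2_eq_square)
    qed simp
    ultimately show ?thesis using S0 by linarith
  qed
  then show ?thesis by blast
qed

locale Wpot =
  fixes W :: "real \<Rightarrow> real"
  assumes W_diff: "\<forall>s. W differentiable (at s)"
    and W_C1: "continuous_on UNIV (deriv W)"
    and W_i: "\<exists>\<eta>>0. \<forall>s. (\<bar>s\<bar> \<le> 1 \<longrightarrow> W s \<ge> \<eta> * s\<^sup>2) \<and> (\<bar>s\<bar> \<ge> 1 \<longrightarrow> W s \<ge> \<eta>)"
    and W_ii: "(deriv W has_real_derivative 1) (at 0)"
    and W_iii: "\<exists>M>0. \<exists>\<alpha>. 0 \<le> \<alpha> \<and> \<alpha> < 2 \<and> (\<forall>s\<ge>0. W s \<le> M * s powr \<alpha>)"
begin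

lemma Wd: "(W has_real_derivative deriv W s) (at s)"
  using W_diff DERIV_deriv_iff_real_differentiable by blast

lemma W_cont: "continuous_on UNIV W"
  using Wd by (meson DERIV_isCont continuous_at_imp_continuous_on)

lemma W_meas[measurable]: "W \<in> borel_measurable borel"
  using W_cont by (simp add: borel_measurable_continuous_onI)

lemma Wp_meas[measurable]: "deriv W \<in> borel_measurable borel"
  using W_C1 by (simp add: borel_measurable_continuous_onI)

lemma W_nonneg: "0 \<le> W s"
proof -
  obtain \<eta> where \<eta>: "\<eta> > 0" "\<forall>s. (\<bar>s\<bar> \<le> 1 \<longrightarrow> W s \<ge> \<eta> * s\<^sup>2) \<and> (\<bar>s\<bar> \<ge> 1 \<longrightarrow> W s \<ge> \<eta>)"
    using W_i by blast
  show ?thesis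
  proof (cases "\<bar>s\<bar> \<le> 1")
    case True
    then have "\<eta> * s\<^sup>2 \<le> W s" using \<eta> by blast
    moreover have "0 \<le> \<eta> * s\<^sup>2" using \<eta> by simp
    ultimately show ?thesis by linarith
  next
    case False
    then have "\<eta> \<le> W s" using \<eta> by auto
    then show ?thesis using \<eta> by linarith
  qed
qed

lemma W0: "W 0 = 0"
proof -
  obtain M \<alpha> where "M > 0" "\<forall>s\<ge>0. W s \<le> M * s powr \<alpha>" using W_iii by blast
  then have "W 0 \<le> 0" by force
  then show ?thesis using W_nonneg[of 0] by simp
qed

lemma Wp0: "deriv W 0 = 0"
  by (rule DERIV_local_min[OF Wd, of 1]) (auto simp: W0 W_nonneg)

lemma Wp_bound: "\<exists>L\<ge>0. \<forall>s. \<bar>s\<bar> \<le> R \<longrightarrow> \<bar>deriv W s\<bar> \<le> L * \<bar>s\<bar>"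
proof -
  have lim: "((\<lambda>y. (deriv W y - deriv W 0) / (y - 0)) \<longlongrightarrow> 1) (at 0)"
    using W_ii unfolding has_field_derivative_iff .
  have "\<forall>\<^sub>F y in at 0. (deriv W y - deriv W 0) / (y - 0) < 2"
    by (rule order_tendstoD(2)[OF lim]) simp
  moreover have "\<forall>\<^sub>F y in at 0. (deriv W y - deriv W 0) / (y - 0) > 0"
    by (rule order_tendstoD(1)[OF lim]) simp
  ultimately have "\<forall>\<^sub>F y in at (0::real). 0 < deriv W y / y \<and> deriv W y / y < 2"
    by eventually_elim (simp add: Wp0)
  then obtain d where d: "d > 0" "\<And>y. y \<noteq> 0 \<Longrightarrow> dist y 0 < d \<Longrightarrow> 0 < deriv W y / y \<and> deriv W y / y < 2"
    unfolding eventually_at by blast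
  have small: "\<bar>deriv W y\<bar> \<le> 2 * \<bar>y\<bar>" if "\<bar>y\<bar> < d" for y
  proof (cases "y = 0")
    case True then show ?thesis by (simp add: Wp0)
  next
    case False
    then have h: "0 < deriv W y / y" "deriv W y / y < 2" using d that by auto
    have "\<bar>deriv W y\<bar> = \<bar>deriv W y / y\<bar> * \<bar>y\<bar>" using False by (simp add: abs_divide)
    also have "\<dots> \<le> 2 * \<bar>y\<bar>" using h by (intro mult_right_mono) auto
    finally show ?thesis .
  qed
  have "compact (deriv W ` {-R..R})"
    by (rule compact_continuous_image) (auto intro: continuous_on_subset[OF W_C1])
  then obtain B where B: "\<forall>y\<in>deriv W ` {-R..R}. norm y \<le> B"
    using compact_imp_bounded bounded_iff by metis
  define L where "L = max 2 (max B 0 / d)"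
  have "\<forall>s. \<bar>s\<bar> \<le> R \<longrightarrow> \<bar>deriv W s\<bar> \<le> L * \<bar>s\<bar>"
  proof (intro allI impI)
    fix s assume s: "\<bar>s\<bar> \<le> R"
    show "\<bar>deriv W s\<bar> \<le> L * \<bar>s\<bar>"
    proof (cases "\<bar>s\<bar> < d")
      case True
      then have "\<bar>deriv W s\<bar> \<le> 2 * \<bar>s\<bar>" by (rule small)
      also have "\<dots> \<le> L * \<bar>s\<bar>" unfolding L_def by (intro mult_right_mono) auto
      finally show ?thesis .
    next
      case False
      have "s \<in> {-R..R}" using s by auto
      then have "norm (deriv W s) \<le> B" using B by blast
      then have "\<bar>deriv W s\<bar> \<le> max B 0" by simp
      also have "\<dots> = (max B 0 / d) * d" using d by simp
      also have "\<dots> \<le> (max B 0 / d) * \<bar>s\<bar>" using False d by (intro mult_left_mono) auto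
      also have "\<dots> \<le> L * \<bar>s\<bar>" unfolding L_def by (intro mult_right_mono) auto
      finally show ?thesis .
    qed
  qed
  moreover have "L \<ge> 0" unfolding L_def by simp
  ultimately show ?thesis by blast
qed

lemma W_bound: "\<exists>K\<ge>0. \<forall>s. \<bar>s\<bar> \<le> R \<longrightarrow> W s \<le> K * s\<^sup>2"
proof -
  obtain L where L: "L \<ge> 0" "\<forall>s. \<bar>s\<bar> \<le> R \<longrightarrow> \<bar>deriv W s\<bar> \<le> L * \<bar>s\<bar>" using Wp_bound by blast
  have "W s \<le> L * s\<^sup>2" if s: "\<bar>s\<bar> \<le> R" for s
  proof (cases s "0::real" rule: linorder_cases)
    case less
    obtain z where z: "s < z" "z < 0" "W 0 - W s = (0 - s) * deriv W z"
      using MVT2[OF less, of W "deriv W"] Wd by blast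
    have "\<bar>z\<bar> \<le> R" using z s by auto
    then have "\<bar>deriv W z\<bar> \<le> L * \<bar>z\<bar>" using L by blast
    also have "\<dots> \<le> L * \<bar>s\<bar>" using z L by (intro mult_left_mono) auto
    finally have "W s \<le> \<bar>s\<bar> * (L * \<bar>s\<bar>)" using z W0
      by (smt (verit, best) abs_mult abs_of_nonneg less mult_left_mono abs_ge_zero abs_minus_cancel)
    then show ?thesis by (simp add: power2_eq_square abs_mult_self_eq mult.assoc mult.left_commute[of L])
  next
    case equal then show ?thesis by (simp add: W0)
  next
    case greater
    obtain z where z: "0 < z" "z < s" "W s - W 0 = (s - 0) * deriv W z"
      using MVT2[OF greater, of W "deriv W"] Wd by blast
    have "\<bar>z\<bar> \<le> R" using z s by auto
    then have "\<bar>deriv W z\<bar> \<le> L * \<bar>z\<bar>" using L by blast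
    also have "\<dots> \<le> L * \<bar>s\<bar>" using z L by (intro mult_left_mono) auto
    finally have "W s \<le> \<bar>s\<bar> * (L * \<bar>s\<bar>)" using z W0
      by (smt (verit, best) abs_mult abs_of_nonneg greater mult_left_mono abs_ge_zero)
    then show ?thesis by (simp add: power2_eq_square abs_mult_self_eq mult.assoc mult.left_commute[of L])
  qed
  then show ?thesis using L by blast
qed

lemma W_int:
  assumes g: "L2fun g" and bd: "\<And>x. \<bar>g x\<bar> \<le> R"
  shows "integrable lborel (\<lambda>x. W (g x))"
proof -
  obtain K where K: "K \<ge> 0" "\<forall>s. \<bar>s\<bar> \<le> R \<longrightarrow> W s \<le> K * s\<^sup>2" using W_bound by blast
  have [measurable]: "g \<in> borel_measurable borel" using g unfolding L2fun_def by simp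
  show ?thesis
  proof (rule Bochner_Integration.integrable_bound[of _ "\<lambda>x. K * (g x)\<^sup>2"])
    show "integrable lborel (\<lambda>x. K * (g x)\<^sup>2)" using g unfolding L2fun_def by simp
    show "(\<lambda>x. W (g x)) \<in> borel_measurable lborel" by measurable
    show "AE x in lborel. norm (W (g x)) \<le> norm (K * (g x)\<^sup>2)"
      using K bd W_nonneg by (auto intro!: AE_I2)
  qed
qed

end

lemma uxx_spec: "u \<in> H2 \<Longrightarrow> L2fun (uxx u) \<and> is_d2 u (uxx u)"
proof -
  assume "u \<in> H2"
  then have "\<exists>w. L2fun w \<and> is_d2 u w" unfolding H2_def by simp
  then show ?thesis unfolding uxx_def by (rule someI_ex)
qed

lemma d2_unique:
  assumes d1: "is_d2 u w1" and d2: "is_d2 u w2" and l1: "L2fun w1" and l2: "L2fun w2"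
  shows "AE x in lborel. w1 x = w2 x"
proof -
  obtain u1 where u1: "\<forall>x. (u has_real_derivative u1 x) (at x)" "\<forall>x. u1 x = u1 0 + (LBINT t=0..x. w1 t)"
    using d1 unfolding is_d2_def by blast
  obtain u2 where u2: "\<forall>x. (u has_real_derivative u2 x) (at x)" "\<forall>x. u2 x = u2 0 + (LBINT t=0..x. w2 t)"
    using d2 unfolding is_d2_def by blast
  have eq: "u1 x = u2 x" for x using u1(1) u2(1) DERIV_unique by blast
  have ll: "L2fun (\<lambda>x. w1 x - w2 x)" by (rule L2fun_diff[OF l1 l2])
  have "AE x in lborel. w1 x - w2 x = 0"
  proof (rule AE_zero_intervals)
    show "(\<lambda>x. w1 x - w2 x) \<in> borel_measurable borel" using ll unfolding L2fun_def by simp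
    show "set_integrable lborel {a..b} (\<lambda>x. w1 x - w2 x)" for a b by (rule L2_set_integrable[OF ll])
    fix x
    have i1: "interval_lebesgue_integrable lborel 0 (ereal x) w1"
      using L2_interval_integrable[OF l1, of 0 x] by (simp add: zero_ereal_def)
    have i2: "interval_lebesgue_integrable lborel 0 (ereal x) w2"
      using L2_interval_integrable[OF l2, of 0 x] by (simp add: zero_ereal_def)
    have "(LBINT t=0..ereal x. w1 t - w2 t) = (LBINT t=0..ereal x. w1 t) - (LBINT t=0..ereal x. w2 t)"
      using i1 i2 by simp
    also have "\<dots> = 0"
      using u1(2)[rule_format, of x] u2(2)[rule_format, of x] eq[of x] eq[of 0] by linarith
    finally show "(LBINT t=0..ereal x. w1 t - w2 t) = 0" .
  qed
  then show ?thesis by (rule eventually_mono) simp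
qed

lemma d2_comb:
  assumes du: "is_d2 u w" and dh: "is_d2 h k" and lw: "L2fun w" and lk: "L2fun k"
  shows "is_d2 (\<lambda>x. u x + s * h x) (\<lambda>x. w x + s * k x)"
proof -
  obtain u1 where u1: "\<forall>x. (u has_real_derivative u1 x) (at x)" "L2fun u1" "\<forall>x. u1 x = u1 0 + (LBINT t=0..x. w t)"
    using du unfolding is_d2_def by blast
  obtain h1 where h1: "\<forall>x. (h has_real_derivative h1 x) (at x)" "L2fun h1" "\<forall>x. h1 x = h1 0 + (LBINT t=0..x. k t)"
    using dh unfolding is_d2_def by blast
  show ?thesis unfolding is_d2_def
  proof (intro exI[of _ "\<lambda>x. u1 x + s * h1 x"] conjI allI)
    show "((\<lambda>x. u x + s * h x) has_real_derivative u1 x + s * h1 x) (at x)" for x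
      using u1(1) h1(1) by (auto intro!: derivative_eq_intros)
    show "L2fun (\<lambda>x. u1 x + s * h1 x)" by (intro L2fun_add L2fun_cmult u1(2) h1(2))
    fix x
    have i1: "interval_lebesgue_integrable lborel 0 (ereal x) w"
      using L2_interval_integrable[OF lw, of 0 x] by (simp add: zero_ereal_def)
    have i2: "interval_lebesgue_integrable lborel 0 (ereal x) k"
      using L2_interval_integrable[OF lk, of 0 x] by (simp add: zero_ereal_def)
    have "(LBINT t=0..ereal x. w t + s * k t) = (LBINT t=0..ereal x. w t) + s * (LBINT t=0..ereal x. k t)"
      using i1 i2 by simp
    then show "u1 x + s * h1 x = u1 0 + s * h1 0 + (LBINT t=0..ereal x. w t + s * k t)"
      using u1(3)[rule_format, of x] h1(3)[rule_format, of x] by (simp add: algebra_simps)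
  qed
qed

lemma H2_comb:
  assumes u: "u \<in> H2" and lh: "L2fun h" and dh: "is_d2 h k" and lk: "L2fun k"
  shows "(\<lambda>x. u x + s * h x) \<in> H2"
    and "AE x in lborel. uxx (\<lambda>x. u x + s * h x) x = uxx u x + s * k x"
proof -
  have su: "L2fun (uxx u)" "is_d2 u (uxx u)" using uxx_spec[OF u] by auto
  have lu: "L2fun u" using u unfolding H2_def by simp
  have dc: "is_d2 (\<lambda>x. u x + s * h x) (\<lambda>x. uxx u x + s * k x)"
    by (rule d2_comb[OF su(2) dh su(1) lk])
  have lc: "L2fun (\<lambda>x. uxx u x + s * k x)" by (intro L2fun_add L2fun_cmult su(1) lk)
  show H: "(\<lambda>x. u x + s * h x) \<in> H2"
    unfolding H2_def using dc lc L2fun_add[OF lu L2fun_cmult[OF lh]] by blast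
  have sc: "L2fun (uxx (\<lambda>x. u x + s * h x))" "is_d2 (\<lambda>x. u x + s * h x) (uxx (\<lambda>x. u x + s * h x))"
    using uxx_spec[OF H] by auto
  show "AE x in lborel. uxx (\<lambda>x. u x + s * h x) x = uxx u x + s * k x"
    by (rule d2_unique[OF sc(2) dc sc(1) lc])
qed

lemma u1_cont:
  fixes u1 w :: "real \<Rightarrow> real"
  assumes lw: "L2fun w" and f: "\<forall>x. u1 x = u1 0 + (LBINT t=0..x. w t)"
  shows "continuous_on UNIV u1"
proof -
  have "isCont u1 x0" for x0
  proof -
    define a where "a = - \<bar>x0\<bar> - 1"
    define b where "b = \<bar>x0\<bar> + 1"
    have ab: "a \<le> 0" "0 \<le> b" "a < x0" "x0 < b" unfolding a_def b_def by auto
    have si: "set_integrable lborel {a..b} w" by (rule L2_set_integrable[OF lw])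
    have io: "w integrable_on {a..b}" using set_borel_integral_eq_integral(1)[OF si] .
    have eq: "u1 x = u1 0 + integral {a..x} w - integral {a..0} w" if "x \<in> {a..b}" for x
    proof -
      have sub: "set_integrable lborel {a..y} w" for y by (rule L2_set_integrable[OF lw])
      have "(LBINT t=ereal a..ereal 0. w t) + (LBINT t=ereal 0..ereal x. w t) = (LBINT t=ereal a..ereal x. w t)"
        by (rule interval_integral_sum) (use L2_interval_integrable[OF lw] in \<open>auto simp: min_def max_def\<close>)
      moreover have "(LBINT t=ereal a..ereal 0. w t) = integral {a..0} w"
        using interval_integral_eq_integral[OF ab(1) sub] by simp
      moreover have "(LBINT t=ereal a..ereal x. w t) = integral {a..x} w"
        using interval_integral_eq_integral[OF _ sub] that by simp
      moreover have "u1 x = u1 0 + (LBINT t=ereal 0..ereal x. w t)"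
        using f[rule_format, of x] by (simp only: zero_ereal_def)
      ultimately show ?thesis by linarith
    qed
    have "continuous_on {a..b} (\<lambda>x. u1 0 + integral {a..x} w - integral {a..0} w)"
      by (intro continuous_intros indefinite_integral_continuous_1 io)
    then have "continuous_on {a..b} u1"
      by (rule continuous_on_eq) (use eq in auto)
    moreover have "x0 \<in> interior {a..b}" using ab by auto
    ultimately show ?thesis by (rule continuous_on_interior)
  qed
  then show ?thesis by (simp add: continuous_at_imp_continuous_on)
qed

lemma J_stationary:
  fixes Ef Cf :: "real \<Rightarrow> real"
  assumes dE: "(Ef has_real_derivative E') (at 0)" and dC: "(Cf has_real_derivative C') (at 0)"
    and C0: "Cf 0 \<noteq> 0"
    and min: "\<And>s. Cf s \<noteq> 0 \<Longrightarrow> Ef 0 / \<bar>Cf 0\<bar> + \<delta> * Ef 0 \<le> Ef s / \<bar>Cf s\<bar> + \<delta> * Ef s"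
  shows "(1 / \<bar>Cf 0\<bar> + \<delta>) * E' - Ef 0 * sgn (Cf 0) / (Cf 0)\<^sup>2 * C' = 0"
proof -
  define \<sigma> where "\<sigma> = sgn (Cf 0)"
  have s2: "\<sigma> * \<sigma> = 1" "\<sigma> * Cf 0 = \<bar>Cf 0\<bar>" using C0 unfolding \<sigma>_def by (auto simp: sgn_if)
  have sc0: "\<sigma> * Cf 0 > 0" using s2 C0 by simp
  have "isCont Cf 0" using dC by (rule DERIV_isCont)
  then have "((\<lambda>s. \<sigma> * Cf s) \<longlongrightarrow> \<sigma> * Cf 0) (at 0)"
    unfolding isCont_def by (rule tendsto_mult_left)
  then have "\<forall>\<^sub>F s in at 0. \<sigma> * Cf s > 0"
    using sc0 by (rule order_tendstoD(1))
  then obtain d0 where d0: "d0 > 0" "\<And>s. s \<noteq> 0 \<Longrightarrow> dist s 0 < d0 \<Longrightarrow> \<sigma> * Cf s > 0"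
    unfolding eventually_at by blast
  have d: "d0 > 0" "\<And>s. dist s 0 < d0 \<Longrightarrow> \<sigma> * Cf s > 0"
    using d0 sc0 by (metis dist_self)+
  define g where "g s = Ef s / (\<sigma> * Cf s) + \<delta> * Ef s" for s
  have dg: "(g has_real_derivative (E' * (\<sigma> * Cf 0) - Ef 0 * (\<sigma> * C')) / (\<sigma> * Cf 0 * (\<sigma> * Cf 0)) + \<delta> * E') (at 0)"
    unfolding g_def[abs_def]
    by (intro DERIV_add DERIV_divide DERIV_cmult dE dC) (use sc0 in \<open>auto simp: mult_eq_0_iff\<close>)
  have "(E' * (\<sigma> * Cf 0) - Ef 0 * (\<sigma> * C')) / (\<sigma> * Cf 0 * (\<sigma> * Cf 0)) + \<delta> * E' = 0"
  proof (rule DERIV_local_min[OF dg d(1)])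
    show "\<forall>y. \<bar>0 - y\<bar> < d0 \<longrightarrow> g 0 \<le> g y"
    proof (intro allI impI)
      fix y assume "\<bar>0 - y\<bar> < d0"
      then have p: "\<sigma> * Cf y > 0" using d by (simp add: dist_real_def)
      then have "Cf y \<noteq> 0" by auto
      from min[OF this] have "Ef 0 / \<bar>Cf 0\<bar> + \<delta> * Ef 0 \<le> Ef y / \<bar>Cf y\<bar> + \<delta> * Ef y" .
      moreover have "\<bar>Cf y\<bar> = \<sigma> * Cf y"
        using p s2 unfolding \<sigma>_def by (auto simp: sgn_if split: if_splits)
      ultimately show "g 0 \<le> g y" unfolding g_def using s2 by simp
    qed
  qed
  moreover have "(E' * (\<sigma> * Cf 0) - Ef 0 * (\<sigma> * C')) / (\<sigma> * Cf 0 * (\<sigma> * Cf 0)) + \<delta> * E'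
      = (1 / \<bar>Cf 0\<bar> + \<delta>) * E' - Ef 0 * sgn (Cf 0) / (Cf 0)\<^sup>2 * C'"
  proof -
    have "\<sigma> * Cf 0 * (\<sigma> * Cf 0) = (Cf 0)\<^sup>2" using s2 by (simp add: power2_eq_square algebra_simps)
    moreover have "\<bar>Cf 0\<bar> \<noteq> 0" using C0 by simp
    ultimately show ?thesis unfolding \<sigma>_def[symmetric] using s2 C0
      by (simp add: field_simps power2_eq_square)
  qed
  ultimately show ?thesis by simp
qed

lemma aff_iter:
  fixes us :: "nat \<Rightarrow> real \<Rightarrow> real"
  assumes d: "\<And>j y. j < n \<Longrightarrow> (us j has_real_derivative us (Suc j) y) (at y)"
  shows "j \<le> n \<Longrightarrow> (deriv ^^ j) (\<lambda>t. us 0 (p + q * t)) = (\<lambda>t. q^j * us j (p + q * t))"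
proof (induction j)
  case 0 then show ?case by simp
next
  case (Suc j)
  then have IH: "(deriv ^^ j) (\<lambda>t. us 0 (p + q * t)) = (\<lambda>t. q^j * us j (p + q * t))" by simp
  have "((\<lambda>t. q^j * us j (p + q * t)) has_real_derivative q^(Suc j) * us (Suc j) (p + q * t)) (at t)" for t
  proof -
    have "((\<lambda>t. us j (p + q * t)) has_real_derivative us (Suc j) (p + q * t) * q) (at t)"
      by (rule DERIV_chain2[OF d]) (use Suc in \<open>auto intro!: derivative_eq_intros\<close>)
    from DERIV_cmult[OF this, of "q^j"] show ?thesis by (simp add: algebra_simps)
  qed
  then have "deriv (\<lambda>t. q^j * us j (p + q * t)) = (\<lambda>t. q^(Suc j) * us (Suc j) (p + q * t))"
    by (intro ext DERIV_imp_deriv)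
  moreover have "(deriv ^^ Suc j) (\<lambda>t. us 0 (p + q * t)) = deriv (\<lambda>t. q^j * us j (p + q * t))"
    using IH by simp
  ultimately show ?case by simp
qed

lemma aff_diff_upto:
  fixes us :: "nat \<Rightarrow> real \<Rightarrow> real"
  assumes d: "\<And>j y. j < n \<Longrightarrow> (us j has_real_derivative us (Suc j) y) (at y)"
  shows "diff_upto n (\<lambda>t. us 0 (p + q * t))"
  unfolding diff_upto_def
proof (intro allI impI)
  fix j t assume j: "j < n"
  have "((\<lambda>t. q^j * us j (p + q * t)) has_real_derivative q^(Suc j) * us (Suc j) (p + q * t)) (at t)"
  proof -
    have "((\<lambda>t. us j (p + q * t)) has_real_derivative us (Suc j) (p + q * t) * q) (at t)"
      by (rule DERIV_chain2[OF d]) (use j in \<open>auto intro!: derivative_eq_intros\<close>)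
    from DERIV_cmult[OF this, of "q^j"] show ?thesis by (simp add: algebra_simps)
  qed
  then show "((deriv ^^ j) (\<lambda>t. us 0 (p + q * t)) has_real_derivative (deriv ^^ Suc j) (\<lambda>t. us 0 (p + q * t)) t) (at t)"
    using aff_iter[where us=us and n=n and j=j and p=p and q=q, OF d] aff_iter[where us=us and n=n and j="Suc j" and p=p and q=q, OF d] j by simp
qed

context Wpot
begin

lemma W_int_deriv:
  fixes u h :: "real \<Rightarrow> real"
  assumes uc: "continuous_on UNIV u" and hc: "continuous_on UNIV h"
    and supp: "\<And>x. x \<notin> {A..B} \<Longrightarrow> h x = 0" and AB: "A \<le> B"
    and ints: "\<And>s. integrable lborel (\<lambda>x. W (u x + s * h x))"
  shows "((\<lambda>s. LINT x|lborel. W (u x + s * h x)) has_real_derivative (LINT x|lborel. deriv W (u x) * h x)) (at 0)"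
proof -
  have Wc: "continuous_on UNIV W" by (rule W_cont)
  have cI: "continuous_on UNIV (\<lambda>x. W (u x + s * h x) - W (u x))" for s
    by (intro continuous_intros continuous_on_compose2[OF Wc] uc hc) auto
  have cI2: "continuous_on UNIV (\<lambda>x. deriv W (u x) * h x)"
    by (intro continuous_intros continuous_on_compose2[OF W_C1] uc hc) auto
  have eqf: "(LINT x|lborel. W (u x + s * h x)) = (LINT x|lborel. W (u x)) + integral {A..B} (\<lambda>x. W (u x + s * h x) - W (u x))" for s
  proof -
    have "(LINT x|lborel. W (u x + s * h x)) - (LINT x|lborel. W (u x)) = (LINT x|lborel. W (u x + s * h x) - W (u x))"
      using Bochner_Integration.integral_diff[OF ints[of s] ints[of 0]] by simp
    also have "\<dots> = (LBINT x=ereal A..ereal B. W (u x + s * h x) - W (u x))"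
      by (rule LINT_supp[OF _ AB]) (simp add: supp)
    also have "\<dots> = integral {A..B} (\<lambda>x. W (u x + s * h x) - W (u x))"
      by (rule interval_integral_eq_integral[OF AB])
         (rule borel_integrable_atLeastAtMost', use cI in \<open>auto intro: continuous_on_subset\<close>)
    finally show ?thesis by simp
  qed
  have lei: "((\<lambda>s. integral (cbox A B) (\<lambda>x. W (u x + s * h x) - W (u x))) has_field_derivative
      integral (cbox A B) (\<lambda>x. deriv W (u x + 0 * h x) * h x)) (at 0 within UNIV)"
  proof (rule leibniz_rule_field_derivative[where fx="\<lambda>s x. deriv W (u x + s * h x) * h x"])
    fix s x
    show "((\<lambda>s. W (u x + s * h x) - W (u x)) has_field_derivative deriv W (u x + s * h x) * h x) (at s within UNIV)"
    proof -
      have "((\<lambda>s. W (u x + s * h x)) has_real_derivative deriv W (u x + s * h x) * h x) (at s)"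
        by (rule DERIV_chain2[OF Wd]) (auto intro!: derivative_eq_intros)
      then show ?thesis by (auto intro!: derivative_eq_intros)
    qed
  next
    fix s :: real
    show "(\<lambda>x. W (u x + s * h x) - W (u x)) integrable_on cbox A B"
      by (rule integrable_continuous) (use cI in \<open>auto intro: continuous_on_subset\<close>)
  next
    have "continuous_on (UNIV \<times> cbox A B) (\<lambda>p. deriv W (u (snd p) + fst p * h (snd p)) * h (snd p))"
      by (intro continuous_intros continuous_on_compose2[OF W_C1] continuous_on_compose2[OF uc] continuous_on_compose2[OF hc]) auto
    then show "continuous_on (UNIV \<times> cbox A B) (\<lambda>(s, x). deriv W (u x + s * h x) * h x)"
      by (simp add: case_prod_beta)
  qed auto
  have "integral {A..B} (\<lambda>x. deriv W (u x) * h x) = (LINT x|lborel. deriv W (u x) * h x)"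
  proof -
    have "(LINT x|lborel. deriv W (u x) * h x) = (LBINT x=ereal A..ereal B. deriv W (u x) * h x)"
      by (rule LINT_supp[OF _ AB]) (simp add: supp)
    also have "\<dots> = integral {A..B} (\<lambda>x. deriv W (u x) * h x)"
      by (rule interval_integral_eq_integral[OF AB])
         (rule borel_integrable_atLeastAtMost', use cI2 in \<open>auto intro: continuous_on_subset\<close>)
    finally show ?thesis by simp
  qed
  then have lei2: "((\<lambda>s. integral {A..B} (\<lambda>x. W (u x + s * h x) - W (u x))) has_real_derivative
      (LINT x|lborel. deriv W (u x) * h x)) (at 0)"
    using lei by simp
  have "((\<lambda>s. (LINT x|lborel. W (u x)) + integral {A..B} (\<lambda>x. W (u x + s * h x) - W (u x))) has_real_derivative
      0 + (LINT x|lborel. deriv W (u x) * h x)) (at 0)"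
    by (rule DERIV_add[OF DERIV_const lei2])
  then show ?thesis unfolding eqf[symmetric] by simp
qed

end

lemma int3:
  fixes f1 f2 f3 :: "real \<Rightarrow> real"
  assumes "integrable lborel f1" "integrable lborel f2" "integrable lborel f3"
  shows "(LINT x|lborel. f1 x + a * f2 x + b * f3 x) = (LINT x|lborel. f1 x) + a * (LINT x|lborel. f2 x) + b * (LINT x|lborel. f3 x)"
  using assms by simp

locale sol = Wpot W for W +
  fixes \<delta> :: real and ud vd :: "real \<Rightarrow> real"
  assumes delta_pos: "\<delta> > 0"
    and ud_H2: "ud \<in> H2" and vd_L2: "L2fun vd"
    and C_nz: "momentum ud vd \<noteq> 0"
    and minimizer: "\<forall>u\<in>H2. \<forall>v. L2fun v \<longrightarrow> momentum u v \<noteq> 0 \<longrightarrow>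
                      Jdelta \<delta> W ud vd \<le> Jdelta \<delta> W u v"
begin

definition "w = uxx ud"

lemma lw: "L2fun w" and dw: "is_d2 ud w"
  using uxx_spec[OF ud_H2] unfolding w_def by auto

definition "u1 = deriv ud"

lemma u1_props: "\<forall>x. (ud has_real_derivative u1 x) (at x)" "L2fun u1" "\<forall>x. u1 x = u1 0 + (LBINT t=0..x. w t)"
proof -
  obtain v1 where v1: "\<forall>x. (ud has_real_derivative v1 x) (at x)" "L2fun v1" "\<forall>x. v1 x = v1 0 + (LBINT t=0..x. w t)"
    using dw unfolding is_d2_def by blast
  have "deriv ud x = v1 x" for x using v1(1) DERIV_imp_deriv by blast
  then have "u1 = v1" unfolding u1_def by (rule ext)
  then show "\<forall>x. (ud has_real_derivative u1 x) (at x)" "L2fun u1" "\<forall>x. u1 x = u1 0 + (LBINT t=0..x. w t)"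
    using v1 by blast+
qed

lemma lu: "L2fun ud" using ud_H2 unfolding H2_def by simp

lemma uc: "continuous_on UNIV ud"
  using u1_props(1) by (meson DERIV_isCont continuous_at_imp_continuous_on)

lemma u1c: "continuous_on UNIV u1"
  by (rule u1_cont[OF lw u1_props(3)])

lemma ud_bdd: "\<exists>R. \<forall>x. \<bar>ud x\<bar> \<le> R"
  using H1_bounded[OF lu u1_props(2)] u1_props(1) by blast

definition "E0 = energy W ud vd"
definition "C0 = momentum ud vd"
definition "A = 1 / \<bar>C0\<bar> + \<delta>"
definition "K = E0 * sgn C0 / C0\<^sup>2"
definition "c = K / A"

lemma A_pos: "A > 0"
proof -
  have "0 \<le> 1 / \<bar>C0\<bar>" by simp
  then show ?thesis unfolding A_def using delta_pos by linarith
qed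

lemma J_eq: "Jdelta \<delta> W u v = energy W u v / \<bar>momentum u v\<bar> + \<delta> * energy W u v"
  by (simp add: Jdelta_def)

lemma iv2: "integrable lborel (\<lambda>x. (vd x)\<^sup>2)" using vd_L2 unfolding L2fun_def by simp
lemma iw2: "integrable lborel (\<lambda>x. (w x)\<^sup>2)" using lw unfolding L2fun_def by simp

lemma E0_eq: "E0 = 1/2 * (LINT x|lborel. (vd x)\<^sup>2 + (w x)\<^sup>2) + (LINT x|lborel. W (ud x))"
  unfolding E0_def energy_def w_def ..

lemma C0_eq: "C0 = - (LINT x|lborel. vd x * u1 x)"
  unfolding C0_def momentum_def u1_def ..

lemma C0_nz: "C0 \<noteq> 0" using C_nz unfolding C0_def .

lemma stepV: "AE x in lborel. vd x = - c * u1 x"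
proof -
  define g where "g x = A * vd x + K * u1 x" for x
  have lu1: "L2fun u1" by (rule u1_props(2))
  have lg: "L2fun g" unfolding g_def by (intro L2fun_add L2fun_cmult vd_L2 lu1)
  have ivg: "integrable lborel (\<lambda>x. vd x * g x)" by (rule L2_mult[OF vd_L2 lg])
  have ig2: "integrable lborel (\<lambda>x. (g x)\<^sup>2)" using lg unfolding L2fun_def by simp
  have igu: "integrable lborel (\<lambda>x. g x * u1 x)" by (rule L2_mult[OF lg lu1])
  have ivu: "integrable lborel (\<lambda>x. vd x * u1 x)" by (rule L2_mult[OF vd_L2 lu1])
  have ivw: "integrable lborel (\<lambda>x. (vd x)\<^sup>2 + (w x)\<^sup>2)" using iv2 iw2 by simp
  define a where "a = (LINT x|lborel. vd x * g x)"
  define b where "b = (LINT x|lborel. (g x)\<^sup>2)"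
  define bb where "bb = (LINT x|lborel. g x * u1 x)"
  have Ef_eq: "energy W ud (\<lambda>x. vd x + s * g x) = E0 + s * a + s\<^sup>2 / 2 * b" for s
  proof -
    have "(LINT x|lborel. (vd x + s * g x)\<^sup>2 + (uxx ud x)\<^sup>2)
        = (LINT x|lborel. ((vd x)\<^sup>2 + (w x)\<^sup>2) + (2 * s) * (vd x * g x) + s\<^sup>2 * (g x)\<^sup>2)"
      unfolding w_def by (rule Bochner_Integration.integral_cong) (auto simp: power2_eq_square algebra_simps)
    also have "\<dots> = (LINT x|lborel. (vd x)\<^sup>2 + (w x)\<^sup>2) + (2 * s) * a + s\<^sup>2 * b"
      unfolding a_def b_def by (rule int3[OF ivw ivg ig2])
    finally show ?thesis unfolding energy_def E0_eq by (simp add: algebra_simps)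
  qed
  have Cf_eq: "momentum ud (\<lambda>x. vd x + s * g x) = C0 - s * bb" for s
  proof -
    have "(LINT x|lborel. (vd x + s * g x) * deriv ud x) = (LINT x|lborel. vd x * u1 x + s * (g x * u1 x))"
      unfolding u1_def[symmetric] by (rule Bochner_Integration.integral_cong) (auto simp: algebra_simps)
    also have "\<dots> = (LINT x|lborel. vd x * u1 x) + s * bb"
      unfolding bb_def using ivu igu by simp
    finally show ?thesis unfolding momentum_def C0_eq by simp
  qed
  have st: "(1 / \<bar>(\<lambda>s. C0 - s * bb) 0\<bar> + \<delta>) * a - (\<lambda>s. E0 + s * a + s\<^sup>2 / 2 * b) 0 * sgn ((\<lambda>s. C0 - s * bb) 0) / ((\<lambda>s. C0 - s * bb) 0)\<^sup>2 * (- bb) = 0"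
  proof (rule J_stationary)
    show "((\<lambda>s. E0 + s * a + s\<^sup>2 / 2 * b) has_real_derivative a) (at 0)"
      by (auto intro!: derivative_eq_intros)
    show "((\<lambda>s. C0 - s * bb) has_real_derivative - bb) (at 0)"
      by (auto intro!: derivative_eq_intros)
    show "(\<lambda>s. C0 - s * bb) 0 \<noteq> 0" using C0_nz by simp
    fix s assume nz: "(\<lambda>s. C0 - s * bb) s \<noteq> 0"
    have H: "L2fun (\<lambda>x. vd x + s * g x)" by (intro L2fun_add L2fun_cmult vd_L2 lg)
    have "Jdelta \<delta> W ud vd \<le> Jdelta \<delta> W ud (\<lambda>x. vd x + s * g x)"
      using minimizer ud_H2 H nz Cf_eq[of s] by auto
    then show "(\<lambda>s. E0 + s * a + s\<^sup>2 / 2 * b) 0 / \<bar>(\<lambda>s. C0 - s * bb) 0\<bar> + \<delta> * (\<lambda>s. E0 + s * a + s\<^sup>2 / 2 * b) 0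
         \<le> (\<lambda>s. E0 + s * a + s\<^sup>2 / 2 * b) s / \<bar>(\<lambda>s. C0 - s * bb) s\<bar> + \<delta> * (\<lambda>s. E0 + s * a + s\<^sup>2 / 2 * b) s"
      unfolding J_eq Ef_eq Cf_eq E0_def[symmetric] C0_def[symmetric] by simp
  qed
  then have st2: "A * a + K * bb = 0" unfolding A_def K_def by simp
  have "b = A * a + K * bb"
  proof -
    have "b = (LINT x|lborel. A * (vd x * g x) + K * (g x * u1 x))"
      unfolding b_def by (rule Bochner_Integration.integral_cong) (auto simp: g_def power2_eq_square algebra_simps)
    also have "\<dots> = A * a + K * bb" unfolding a_def bb_def using ivg igu by simp
    finally show ?thesis .
  qed
  then have "(LINT x|lborel. (g x)\<^sup>2) = 0" using st2 unfolding b_def by simp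
  then have "AE x in lborel. (g x)\<^sup>2 = 0"
    by (subst (asm) integral_nonneg_eq_0_iff_AE) (use ig2 in auto)
  then show ?thesis
  proof (rule eventually_mono)
    fix x assume "(g x)\<^sup>2 = 0"
    then have "A * vd x + K * u1 x = 0" unfolding g_def by simp
    then show "vd x = - c * u1 x" unfolding c_def using A_pos by (simp add: field_simps)
  qed
qed

definition "f x = deriv W (ud x)"

lemma fc: "continuous_on UNIV f"
  unfolding f_def[abs_def] by (rule continuous_on_compose2[OF W_C1 uc]) auto

definition "F1 = (SOME F. \<forall>x. (F has_real_derivative f x) (at x))"
lemma F1d: "(F1 has_real_derivative f x) (at x)"
  using someI_ex[OF antideriv[OF fc]] unfolding F1_def by blast
lemma F1c: "continuous_on UNIV F1" using F1d by (meson DERIV_isCont continuous_at_imp_continuous_on)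
definition "F2 = (SOME F. \<forall>x. (F has_real_derivative F1 x) (at x))"
lemma F2d: "(F2 has_real_derivative F1 x) (at x)"
  using someI_ex[OF antideriv[OF F1c]] unfolding F2_def by blast
lemma F2c: "continuous_on UNIV F2" using F2d by (meson DERIV_isCont continuous_at_imp_continuous_on)
definition "F3 = (SOME F. \<forall>x. (F has_real_derivative F2 x) (at x))"
lemma F3d: "(F3 has_real_derivative F2 x) (at x)"
  using someI_ex[OF antideriv[OF F2c]] unfolding F3_def by blast
lemma F3c: "continuous_on UNIV F3" using F3d by (meson DERIV_isCont continuous_at_imp_continuous_on)
definition "U = (SOME F. \<forall>x. (F has_real_derivative ud x) (at x))"
lemma Ud: "(U has_real_derivative ud x) (at x)"
  using someI_ex[OF antideriv[OF uc]] unfolding U_def by blast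
lemma Uc: "continuous_on UNIV U" using Ud by (meson DERIV_isCont continuous_at_imp_continuous_on)
definition "U3 = (SOME F. \<forall>x. (F has_real_derivative U x) (at x))"
lemma U3d: "(U3 has_real_derivative U x) (at x)"
  using someI_ex[OF antideriv[OF Uc]] unfolding U3_def by blast

lemma af: "anti3 f F1 F2 F3"
  by unfold_locales (auto intro: fc F1d F2d F3d)
lemma au: "anti3 u1 ud U U3"
  by unfold_locales (use u1c u1_props(1) Ud U3d in auto)

lemma stepU:
  assumes e: "e > 0"
  shows "D3 (\<lambda>x. u1 x + F3 x + c\<^sup>2 * U x) a e = 0"
proof -
  let ?h = "bsp a e" and ?k = "bsp2 a e" and ?h1 = "bsp1 a e"
  have lh: "L2fun ?h" and lh1: "L2fun ?h1" and lk: "L2fun ?k" using bsp_L2[OF e] by auto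
  have dh: "is_d2 ?h ?k" by (rule bsp_d2[OF e])
  have lu1: "L2fun u1" by (rule u1_props(2))
  have Hs: "(\<lambda>x. ud x + s * ?h x) \<in> H2" for s by (rule H2_comb(1)[OF ud_H2 lh dh lk])
  have AEs: "AE x in lborel. uxx (\<lambda>x. ud x + s * ?h x) x = w x + s * ?k x" for s
    unfolding w_def by (rule H2_comb(2)[OF ud_H2 lh dh lk])
  obtain R where R: "\<forall>x. \<bar>ud x\<bar> \<le> R" using ud_bdd by blast
  obtain Ch where Ch: "\<forall>x. \<bar>?h x\<bar> \<le> Ch" using bsp_bdd[OF e] by blast
  have ints: "integrable lborel (\<lambda>x. W (ud x + s * ?h x))" for s
  proof (rule W_int)
    show "L2fun (\<lambda>x. ud x + s * ?h x)" by (intro L2fun_add L2fun_cmult lu lh)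
    fix x
    have "\<bar>s * ?h x\<bar> \<le> \<bar>s\<bar> * Ch" using Ch by (simp add: abs_mult mult_left_mono)
    then show "\<bar>ud x + s * ?h x\<bar> \<le> R + \<bar>s\<bar> * Ch" using R[rule_format, of x] by linarith
  qed
  define Wf where "Wf s = (LINT x|lborel. W (ud x + s * ?h x))" for s
  have dWf: "(Wf has_real_derivative (LINT x|lborel. f x * ?h x)) (at 0)"
    unfolding Wf_def[abs_def] f_def
    by (rule W_int_deriv[OF uc bsp_cont _ _ ints, where A=a and B="a + 3*e"]) (use e bsp_supp[OF e] in auto)
  have Wf0: "Wf 0 = (LINT x|lborel. W (ud x))" unfolding Wf_def by simp
  have ivw: "integrable lborel (\<lambda>x. (vd x)\<^sup>2 + (w x)\<^sup>2)" using iv2 iw2 by simp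
  have iwk: "integrable lborel (\<lambda>x. w x * ?k x)" by (rule L2_mult[OF lw lk])
  have ik2: "integrable lborel (\<lambda>x. (?k x)\<^sup>2)" using lk unfolding L2fun_def by simp
  define P where "P = (LINT x|lborel. (vd x)\<^sup>2 + (w x)\<^sup>2)"
  define a1 where "a1 = (LINT x|lborel. w x * ?k x)"
  define b1 where "b1 = (LINT x|lborel. (?k x)\<^sup>2)"
  define bb where "bb = (LINT x|lborel. vd x * ?h1 x)"
  have Ef_eq: "energy W (\<lambda>x. ud x + s * ?h x) vd = 1/2 * (P + (2 * s) * a1 + s\<^sup>2 * b1) + Wf s" for s
  proof -
    have m1: "(\<lambda>x. (vd x)\<^sup>2 + (uxx (\<lambda>x. ud x + s * ?h x) x)\<^sup>2) \<in> borel_measurable lborel"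
      using uxx_spec[OF Hs[of s]] vd_L2 unfolding L2fun_def by auto
    have m2: "(\<lambda>x. ((vd x)\<^sup>2 + (w x)\<^sup>2) + (2 * s) * (w x * ?k x) + s\<^sup>2 * (?k x)\<^sup>2) \<in> borel_measurable lborel"
      using ivw iwk ik2 by (auto intro!: borel_measurable_integrable)
    have "(LINT x|lborel. (vd x)\<^sup>2 + (uxx (\<lambda>x. ud x + s * ?h x) x)\<^sup>2)
        = (LINT x|lborel. ((vd x)\<^sup>2 + (w x)\<^sup>2) + (2 * s) * (w x * ?k x) + s\<^sup>2 * (?k x)\<^sup>2)"
    proof (rule integral_cong_AE[OF m1 m2])
      show "AE x in lborel. (vd x)\<^sup>2 + (uxx (\<lambda>x. ud x + s * ?h x) x)\<^sup>2 = ((vd x)\<^sup>2 + (w x)\<^sup>2) + (2 * s) * (w x * ?k x) + s\<^sup>2 * (?k x)\<^sup>2"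
        using AEs[of s] by (rule eventually_mono) (simp add: power2_eq_square algebra_simps)
    qed
    also have "\<dots> = P + (2 * s) * a1 + s\<^sup>2 * b1"
      unfolding P_def a1_def b1_def by (rule int3[OF ivw iwk ik2])
    finally show ?thesis unfolding energy_def Wf_def by simp
  qed
  have dsum: "deriv (\<lambda>x. ud x + s * ?h x) = (\<lambda>x. u1 x + s * ?h1 x)" for s
  proof (rule ext, rule DERIV_imp_deriv)
    fix x show "((\<lambda>x. ud x + s * ?h x) has_real_derivative u1 x + s * ?h1 x) (at x)"
      using u1_props(1) bsp_deriv[of a e x] by (auto intro!: derivative_eq_intros)
  qed
  have ivu: "integrable lborel (\<lambda>x. vd x * u1 x)" by (rule L2_mult[OF vd_L2 lu1])
  have ivh: "integrable lborel (\<lambda>x. vd x * ?h1 x)" by (rule L2_mult[OF vd_L2 lh1])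
  have Cf_eq: "momentum (\<lambda>x. ud x + s * ?h x) vd = C0 - s * bb" for s
  proof -
    have "(LINT x|lborel. vd x * deriv (\<lambda>x. ud x + s * ?h x) x) = (LINT x|lborel. vd x * u1 x + s * (vd x * ?h1 x))"
      unfolding dsum by (rule Bochner_Integration.integral_cong) (auto simp: algebra_simps)
    also have "\<dots> = (LINT x|lborel. vd x * u1 x) + s * bb"
      unfolding bb_def using ivu ivh by simp
    finally show ?thesis unfolding momentum_def C0_eq by simp
  qed
  define Ef where "Ef s = 1/2 * (P + (2 * s) * a1 + s\<^sup>2 * b1) + Wf s" for s
  have dEf: "(Ef has_real_derivative a1 + (LINT x|lborel. f x * ?h x)) (at 0)"
  proof -
    have "((\<lambda>s. 1/2 * (P + (2 * s) * a1 + s\<^sup>2 * b1)) has_real_derivative a1) (at 0)"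
      by (auto intro!: derivative_eq_intros)
    from DERIV_add[OF this dWf] show ?thesis unfolding Ef_def[abs_def] .
  qed
  have Ef0: "Ef 0 = E0" unfolding Ef_def Wf0 E0_eq P_def by simp
  have st: "(1 / \<bar>(\<lambda>s. C0 - s * bb) 0\<bar> + \<delta>) * (a1 + (LINT x|lborel. f x * ?h x)) - Ef 0 * sgn ((\<lambda>s. C0 - s * bb) 0) / ((\<lambda>s. C0 - s * bb) 0)\<^sup>2 * (- bb) = 0"
  proof (rule J_stationary[OF dEf])
    show "((\<lambda>s. C0 - s * bb) has_real_derivative - bb) (at 0)"
      by (auto intro!: derivative_eq_intros)
    show "(\<lambda>s. C0 - s * bb) 0 \<noteq> 0" using C0_nz by simp
    fix s assume nz: "(\<lambda>s. C0 - s * bb) s \<noteq> 0"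
    have "Jdelta \<delta> W ud vd \<le> Jdelta \<delta> W (\<lambda>x. ud x + s * ?h x) vd"
      using minimizer Hs[of s] vd_L2 nz Cf_eq[of s] by auto
    then show "Ef 0 / \<bar>(\<lambda>s. C0 - s * bb) 0\<bar> + \<delta> * Ef 0 \<le> Ef s / \<bar>(\<lambda>s. C0 - s * bb) s\<bar> + \<delta> * Ef s"
      unfolding J_eq Ef_eq Cf_eq Ef0 Ef_def[symmetric] E0_def[symmetric] C0_def[symmetric] by simp
  qed
  then have st2: "A * (a1 + (LINT x|lborel. f x * ?h x)) + K * bb = 0" unfolding A_def K_def Ef0 by simp
  have bb_eq: "bb = - c * (LINT x|lborel. u1 x * ?h1 x)"
  proof -
    have iuh: "integrable lborel (\<lambda>x. u1 x * ?h1 x)" by (rule L2_mult[OF lu1 lh1])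
    have "bb = (LINT x|lborel. (- c) * (u1 x * ?h1 x))"
      unfolding bb_def
    proof (rule integral_cong_AE)
      show "(\<lambda>x. vd x * ?h1 x) \<in> borel_measurable lborel" using ivh by (rule borel_measurable_integrable)
      show "(\<lambda>x. (- c) * (u1 x * ?h1 x)) \<in> borel_measurable lborel" using iuh by (auto intro: borel_measurable_integrable)
      show "AE x in lborel. vd x * ?h1 x = (- c) * (u1 x * ?h1 x)"
        using stepV by (rule eventually_mono) simp
    qed
    then show ?thesis by simp
  qed
  have KcA: "K = c * A" unfolding c_def using A_pos by simp
  have "A * (a1 + (LINT x|lborel. f x * ?h x) - c\<^sup>2 * (LINT x|lborel. u1 x * ?h1 x)) = 0"
    using st2 unfolding bb_eq KcA by (simp add: power2_eq_square algebra_simps)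
  then have wk: "a1 + (LINT x|lborel. f x * ?h x) - c\<^sup>2 * (LINT x|lborel. u1 x * ?h1 x) = 0"
    using A_pos by simp
  have i1: "a1 = - D3 u1 a e" unfolding a1_def by (rule int_bsp2[OF lw u1_props(3) e])
  have i2: "(LINT x|lborel. f x * ?h x) = - D3 F3 a e" by (rule anti3.int_bsp[OF af e])
  have i3: "(LINT x|lborel. u1 x * ?h1 x) = D3 U a e" by (rule anti3.int_bsp1[OF au e])
  show ?thesis using wk unfolding i1 i2 i3 D3_def by (simp add: algebra_simps)
qed

lemma quad: "\<exists>\<alpha> \<beta> \<gamma>. \<forall>x. u1 x = \<alpha> + \<beta>*x + \<gamma>*x\<^sup>2 - F3 x - c\<^sup>2 * U x"
proof -
  have "\<exists>\<alpha> \<beta> \<gamma>. \<forall>x. u1 x + F3 x + c\<^sup>2 * U x = \<alpha> + \<beta>*x + \<gamma>*x\<^sup>2"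
    by (rule D3_zero_quadratic) (use stepU u1c F3c Uc in \<open>auto intro!: continuous_intros\<close>)
  then obtain \<alpha> \<beta> \<gamma> where "\<forall>x. u1 x + F3 x + c\<^sup>2 * U x = \<alpha> + \<beta>*x + \<gamma>*x\<^sup>2" by blast
  then have "\<forall>x. u1 x = \<alpha> + \<beta>*x + \<gamma>*x\<^sup>2 - F3 x - c\<^sup>2 * U x" by (auto simp: algebra_simps)
  then show ?thesis by blast
qed

lemma final:
  "diff_upto 4 ud \<and>
   (\<forall>x. (deriv ^^ 4) ud x + c\<^sup>2 * (deriv ^^ 2) ud x + deriv W (ud x) = 0) \<and>
   beam_solution W (\<lambda>t x. ud (x - c * t)) \<and>
   (AE x in lborel. deriv (\<lambda>t. ud (x - c * t)) 0 = vd x)"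
proof -
  obtain \<alpha> \<beta> \<gamma> where q: "\<forall>x. u1 x = \<alpha> + \<beta>*x + \<gamma>*x\<^sup>2 - F3 x - c\<^sup>2 * U x" using quad by blast
  define u2 where "u2 x = \<beta> + 2 * \<gamma> * x - F2 x - c\<^sup>2 * ud x" for x
  define u3 where "u3 x = 2 * \<gamma> - F1 x - c\<^sup>2 * u1 x" for x
  define u4 where "u4 x = - f x - c\<^sup>2 * u2 x" for x
  have d1: "(ud has_real_derivative u1 y) (at y)" for y using u1_props(1) by blast
  have u1eq: "u1 = (\<lambda>x. \<alpha> + \<beta>*x + \<gamma>*x\<^sup>2 - F3 x - c\<^sup>2 * U x)" using q by (intro ext) blast
  have d2: "(u1 has_real_derivative u2 y) (at y)" for y
  proof -
    have "((\<lambda>x. \<alpha> + \<beta>*x + \<gamma>*x\<^sup>2 - F3 x - c\<^sup>2 * U x) has_real_derivative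
        0 + \<beta> * 1 + \<gamma> * (2 * y) - F2 y - c\<^sup>2 * ud y) (at y)"
      by (intro DERIV_diff DERIV_add DERIV_cmult F3d Ud DERIV_const DERIV_ident)
         (auto intro!: derivative_eq_intros)
    then show ?thesis unfolding u1eq u2_def by (simp add: algebra_simps)
  qed
  have d3: "(u2 has_real_derivative u3 y) (at y)" for y
  proof -
    have "((\<lambda>x. \<beta> + 2 * \<gamma> * x - F2 x - c\<^sup>2 * ud x) has_real_derivative
        0 + 2 * \<gamma> * 1 - F1 y - c\<^sup>2 * u1 y) (at y)"
      by (intro DERIV_diff DERIV_add DERIV_cmult F2d d1 DERIV_const DERIV_ident)
    then show ?thesis unfolding u2_def[abs_def] u3_def by simp
  qed
  have d4: "(u3 has_real_derivative u4 y) (at y)" for y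
  proof -
    have "((\<lambda>x. 2 * \<gamma> - F1 x - c\<^sup>2 * u1 x) has_real_derivative
        0 - f y - c\<^sup>2 * u2 y) (at y)"
      by (intro DERIV_diff DERIV_cmult F1d d2 DERIV_const)
    then show ?thesis unfolding u3_def[abs_def] u4_def by simp
  qed
  define us where "us j = (if j = 0 then ud else if j = 1 then u1 else if j = 2 then u2 else if j = 3 then u3 else u4)" for j :: nat
  have us: "us 0 = ud" "us 1 = u1" "us 2 = u2" "us 3 = u3" "us 4 = u4" unfolding us_def by auto
  have dus: "(us j has_real_derivative us (Suc j) y) (at y)" if "j < 4" for j y
  proof -
    have "j = 0 \<or> j = 1 \<or> j = 2 \<or> j = 3" using that by auto
    then show ?thesis
      using d1 d2 d3 d4 unfolding us_def by (auto simp: numeral_eq_Suc)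
  qed
  have dus2: "(us j has_real_derivative us (Suc j) y) (at y)" if "j < 2" for j y
    using dus that by simp
  have ud_aff: "ud = (\<lambda>t. us 0 (0 + 1 * t))" unfolding us by simp
  have it: "(deriv ^^ j) ud = us j" if "j \<le> 4" for j
  proof -
    have "(deriv ^^ j) (\<lambda>t. us 0 (0 + 1 * t)) = (\<lambda>t. 1^j * us j (0 + 1 * t))"
      by (rule aff_iter[where n=4 and us=us, OF dus that])
    then show ?thesis using ud_aff by simp
  qed
  have D4: "diff_upto 4 ud"
    using aff_diff_upto[where n=4 and us=us and p=0 and q=1, OF dus] ud_aff by simp
  have ode: "(deriv ^^ 4) ud x + c\<^sup>2 * (deriv ^^ 2) ud x + deriv W (ud x) = 0" for x
    using it[of 4] it[of 2] unfolding us u4_def f_def by simp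
  have tform: "(\<lambda>s. ud (x - c * s)) = (\<lambda>s. us 0 (x + (- c) * s))" for x unfolding us by simp
  have xform: "(\<lambda>y. ud (y - c * t)) = (\<lambda>y. us 0 ((- c * t) + 1 * y))" for t unfolding us by (simp add: algebra_simps)
  have beam: "beam_solution W (\<lambda>t x. ud (x - c * t))"
    unfolding beam_solution_def
  proof (intro conjI allI)
    fix x show "diff_upto 2 (\<lambda>t. ud (x - c * t))"
      unfolding tform by (rule aff_diff_upto[where n=2 and us=us, OF dus2])
  next
    fix t show "diff_upto 4 (\<lambda>x. ud (x - c * t))"
      unfolding xform by (rule aff_diff_upto[where n=4 and us=us, OF dus])
  next
    fix t x
    have e1: "(deriv ^^ 2) (\<lambda>s. ud (x - c * s)) t = c\<^sup>2 * u2 (x - c * t)"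
      using aff_iter[where n=4 and us=us and j=2 and p=x and q="-c", OF dus] unfolding tform us
      by (simp add: power2_eq_square algebra_simps)
    have e2: "(deriv ^^ 4) (\<lambda>y. ud (y - c * t)) x = u4 (x - c * t)"
      using aff_iter[where n=4 and us=us and j=4 and p="- c * t" and q=1, OF dus] unfolding xform us
      by (simp add: algebra_simps)
    show "(deriv ^^ 2) (\<lambda>s. ud (x - c * s)) t + (deriv ^^ 4) (\<lambda>y. ud (y - c * t)) x + deriv W (ud (x - c * t)) = 0"
      unfolding e1 e2 u4_def f_def by simp
  qed
  have ae: "AE x in lborel. deriv (\<lambda>t. ud (x - c * t)) 0 = vd x"
    using stepV
  proof (rule eventually_mono)
    fix x assume v: "vd x = - c * u1 x"
    have "(deriv ^^ 1) (\<lambda>s. ud (x - c * s)) = (\<lambda>s. (- c)^1 * us 1 (x + (- c) * s))"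
    proof -
      have one: "(1::nat) \<le> 4" by simp
      show ?thesis unfolding tform by (rule aff_iter[where n=4 and us=us and j=1, OF dus one])
    qed
    then show "deriv (\<lambda>t. ud (x - c * t)) 0 = vd x" unfolding v us by (simp add: fun_eq_iff)
  qed
  show ?thesis using D4 ode beam ae by blast
qed

end

theorem theorem3:
  fixes W :: "real \<Rightarrow> real" and \<delta> :: real and ud vd :: "real \<Rightarrow> real"
  assumes W_diff: "\<forall>s. W differentiable (at s)"
    and W_C1: "continuous_on UNIV (deriv W)"
    and W_i: "\<exists>\<eta>>0. \<forall>s. (\<bar>s\<bar> \<le> 1 \<longrightarrow> W s \<ge> \<eta> * s\<^sup>2) \<and> (\<bar>s\<bar> \<ge> 1 \<longrightarrow> W s \<ge> \<eta>)"
    and W_ii: "(deriv W has_real_derivative 1) (at 0)"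
    and W_iii: "\<exists>M>0. \<exists>\<alpha>. 0 \<le> \<alpha> \<and> \<alpha> < 2 \<and> (\<forall>s\<ge>0. W s \<le> M * s powr \<alpha>)"
    and delta_pos: "\<delta> > 0"
    and ud_H2: "ud \<in> H2" and vd_L2: "L2fun vd"
    and C_nz: "momentum ud vd \<noteq> 0"
    and minimizer: "\<forall>u\<in>H2. \<forall>v. L2fun v \<longrightarrow> momentum u v \<noteq> 0 \<longrightarrow>
                      Jdelta \<delta> W ud vd \<le> Jdelta \<delta> W u v"
  shows "\<exists>c::real.
           diff_upto 4 ud \<and>
           (\<forall>x. (deriv ^^ 4) ud x + c\<^sup>2 * (deriv ^^ 2) ud x + deriv W (ud x) = 0) \<and>
           beam_solution W (\<lambda>t x. ud (x - c * t)) \<and>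
           (AE x in lborel. deriv (\<lambda>t. ud (x - c * t)) 0 = vd x)"
proof -
  interpret sol W \<delta> ud vd
    by unfold_locales (use W_diff W_C1 W_i W_ii W_iii delta_pos ud_H2 vd_L2 C_nz minimizer in auto)
  show ?thesis using final by blast
qed

end
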